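(* Let $\nu(\mathbb{R}^d\setminus\{0\})<\infty$ and assume (B) and (C) below hold with some $E\subset\mathbb{S}^{d-1}$ and $\kappa\ge0$. Let $t_0>0$. (a) For every $t\in(0,t_0]$, $\theta\in E$ and $y\in\mathbb{R}^d$, $$\lim_{s\to\infty}\frac{\widetilde p_t(s\theta-y)}{t\,\nu(s\theta)}=\exp\big(\kappa(\theta\cdot y)\big)\exp\Big(t\int\big(e^{\kappa(\theta\cdot z)}-1\big)\nu(z)\,dz\Big).$$ (b) If the convergence in (C) is uniform in $(\theta,y)\in E\times D$ for every compact $D\subset\mathbb{R}^d$, then the convergence in (a) is uniform in $(t,\theta,y)$ on each set $(0,t_0]\times E\times B(0,\varrho)$, $\varrho>0$.
   Context: Let $d\ge1$ and $\nu$ a Lévy measure on $\mathbb{R}^d\setminus\{0\}$ with finite total mass $|\nu|$; $\nu^{n*}$ is the density of the $n$-fold convolution of $\nu$ and $\widetilde p_t(x)=e^{-t|\nu|}\sum_{n\ge1}\frac{t^n\nu^{n*}(x)}{n!}$. $\Gamma_E=\{y\ne0:y/|y|\in E\}$. (B) $\nu(dx)=\nu(x)dx$; there are nonincreasing $f:(0,\infty)\to(0,\infty)$ and $C_0>0$ with $\nu(x)\le C_0f(|x|)$, $\liminf_{r\to0^+}\frac{\nu(\{|x|>r\})}{f(r)r^d}>0$, and $K(r):=\sup_{|x|>1}\frac{1}{f(|x|)}\int_{|x-y|>r,|y|>r}f(|x-y|)f(|y|)dy$ decreases to $0$ as $r\to\infty$. (C) $\lim_{r\to\infty}\nu(r\theta-y)/\nu(r\theta)=e^{\kappa(\theta\cdot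 y)}$ for all $y\in\mathbb{R}^d$, $\theta\in E$, and $\inf_{x\in\Gamma_E}\nu(x)/f(|x|)>0$. *)

theory Defs
  imports "HOL-Analysis.Analysis"
begin

text \<open>Densities of n-fold convolutions of the (finite) Levy density nu.
  conv_dens nu n is the density of the n-fold convolution (n >= 1);
  the value for n = 0 is an unused dummy.\<close>
fun conv_dens :: "('a::euclidean_space \<Rightarrow> real) \<Rightarrow> nat \<Rightarrow> 'a \<Rightarrow> real" where
  "conv_dens nu 0 = (\<lambda>_. 0)"
| "conv_dens nu (Suc 0) = nu"
| "conv_dens nu (Suc (Suc n)) = (\<lambda>x. LINT y|lborel. conv_dens nu (Suc n) (x - y) * nu y)"

definition total_mass :: "('a::euclidean_space \<Rightarrow> real) \<Rightarrow> real" where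
  "total_mass nu = (LINT x|lborel. nu x)"

definition ptilde :: "('a::euclidean_space \<Rightarrow> real) \<Rightarrow> real \<Rightarrow> 'a \<Rightarrow> real" where
  "ptilde nu t x = exp (- t * total_mass nu) *
     (\<Sum>n. t ^ (Suc n) * conv_dens nu (Suc n) x / fact (Suc n))"

definition K_fun :: "(real \<Rightarrow> real) \<Rightarrow> real \<Rightarrow> ennreal" where
  "K_fun f r = (SUP x\<in>{x::'a::euclidean_space. norm x > 1}.
      (\<integral>\<^sup>+ y. indicator {y. norm (x - y) > r \<and> norm y > r} y
              * ennreal (f (norm (x - y)) * f (norm y)) \<partial>lborel) / ennreal (f (norm x)))"

definition Gamma_cone :: "'a::real_normed_vector set \<Rightarrow> 'a set" where
  "Gamma_cone E = {y. y \<noteq> 0 \<and> y /\<^sub>R norm y \<in> E}"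

end

theory Submission
  imports Defs
begin


lemma nn_integral_reflect_lborel:
  fixes g :: "'a::euclidean_space \<Rightarrow> ennreal"
  assumes [measurable]: "g \<in> borel_measurable borel"
  shows "(\<integral>\<^sup>+x. g (t - x) \<partial>lborel) = (\<integral>\<^sup>+x. g x \<partial>lborel)"
proof -
  have "lborel = density (distr lborel borel (\<lambda>x. t + (-1) *\<^sub>R x)) (\<lambda>_. \<bar>-1::real\<bar>^DIM('a))"
    by (rule lborel_affine) simp
  then have eq: "lborel = distr lborel borel (\<lambda>x::'a. t - x)"
    by (simp add: density_1)
  have "(\<integral>\<^sup>+x. g x \<partial>lborel) = (\<integral>\<^sup>+x. g x \<partial>distr lborel borel (\<lambda>x::'a. t - x))"
    by (subst eq[symmetric]) simp
  also have "\<dots> = (\<integral>\<^sup>+x. g (t - x) \<partial>lborel)"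
    by (rule nn_integral_distr) auto
  finally show ?thesis by simp
qed

lemma nn_integral_shift_lborel:
  fixes g :: "'a::euclidean_space \<Rightarrow> ennreal"
  assumes [measurable]: "g \<in> borel_measurable borel"
  shows "(\<integral>\<^sup>+x. g (x - y) \<partial>lborel) = (\<integral>\<^sup>+x. g x \<partial>lborel)"
proof -
  have "(\<integral>\<^sup>+x. g x \<partial>lborel) = (\<integral>\<^sup>+x. g x \<partial>distr lborel borel ((+) (-y)))"
    by (simp add: lborel_distr_plus)
  also have "\<dots> = (\<integral>\<^sup>+x. g (-y + x) \<partial>lborel)"
    by (rule nn_integral_distr) auto
  finally show ?thesis by simp
qed

lemma integral_reflect_lborel:
  fixes g :: "'a::euclidean_space \<Rightarrow> real"
  assumes [measurable]: "g \<in> borel_measurable borel"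
  shows "(LINT x|lborel. g (t - x)) = (LINT x|lborel. g x)"
proof -
  have "lborel = density (distr lborel borel (\<lambda>x. t + (-1) *\<^sub>R x)) (\<lambda>_. \<bar>-1::real\<bar>^DIM('a))"
    by (rule lborel_affine) simp
  then have eq: "lborel = distr lborel borel (\<lambda>x::'a. t - x)"
    by (simp add: density_1)
  have "(LINT x|lborel. g x) = (LINT x|distr lborel borel (\<lambda>x::'a. t - x). g x)"
    by (subst eq[symmetric]) simp
  also have "\<dots> = (LINT x|lborel. g (t - x))"
    by (rule integral_distr) auto
  finally show ?thesis by simp
qed

lemma ennreal_ind_mult: "c \<ge> 0 \<Longrightarrow> ennreal (indicator S w * c) = indicator S w * ennreal c"
  by (auto simp: indicator_def)

lemma split_ind:
  fixes F :: "'a::euclidean_space \<Rightarrow> real"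
  assumes "integrable lborel F"
  shows "(LINT w|lborel. F w) = (LINT w|lborel. indicator (cball 0 R) w * F w) + (LINT w|lborel. indicator {w. norm w > R} w * F w)"
proof -
  have "(LINT w|lborel. F w) = (LINT w|lborel. indicator (cball 0 R) w * F w + indicator {w. norm w > R} w * F w)"
    by (intro Bochner_Integration.integral_cong) (auto simp: indicator_def)
  also have "\<dots> = (LINT w|lborel. indicator (cball 0 R) w * F w) + (LINT w|lborel. indicator {w. norm w > R} w * F w)"
  proof (rule Bochner_Integration.integral_add)
    show "integrable lborel (\<lambda>w. indicator (cball 0 R) w * F w)"
      using integrable_real_mult_indicator[of "cball 0 R" lborel F] assms by (simp add: mult.commute)
    show "integrable lborel (\<lambda>w. indicator {w. norm w > R} w * F w)"
      using integrable_real_mult_indicator[of "{w. norm w > R}" lborel F] assms by (simp add: mult.commute)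
  qed
  finally show ?thesis .
qed

lemma int_from_nn:
  fixes F :: "'a::euclidean_space \<Rightarrow> real"
  assumes "F \<in> borel_measurable borel" "\<And>z. F z \<ge> 0" "(\<integral>\<^sup>+z. ennreal (F z) \<partial>lborel) \<le> ennreal b" "b \<ge> 0"
  shows "integrable lborel F" "(LINT z|lborel. F z) \<le> b" "0 \<le> (LINT z|lborel. F z)"
proof -
  show "integrable lborel F" using assms by (intro integrableI_nonneg) (auto intro: le_less_trans)
  have "(LINT z|lborel. F z) = enn2real (\<integral>\<^sup>+z. ennreal (F z) \<partial>lborel)"
    using assms by (intro integral_eq_nn_integral) auto
  also have "\<dots> \<le> b" using assms(3,4) by (simp add: enn2real_leI)
  finally show "(LINT z|lborel. F z) \<le> b" .
  show "0 \<le> (LINT z|lborel. F z)" using assms(2) by (simp add: integral_nonneg_AE)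
qed

lemma comb_abstract:
  fixes H :: "real \<Rightarrow> 'i \<Rightarrow> real" and Lim :: "'i \<Rightarrow> real"
  assumes "\<And>\<epsilon>. \<epsilon> > 0 \<Longrightarrow> \<exists>P Pl Q Ql. uniform_limit J P Pl at_top \<and> uniform_limit J Q Ql at_top \<and>
     eventually (\<lambda>s. \<forall>i\<in>J. \<bar>H s i - P s i - Q s i\<bar> \<le> \<epsilon>) at_top \<and> (\<forall>i\<in>J. \<bar>Lim i - Pl i - Ql i\<bar> \<le> \<epsilon>)"
  shows "uniform_limit J H Lim at_top"
  unfolding uniform_limit_iff
proof (intro allI impI)
  fix e :: real assume e: "e > 0"
  obtain P Pl Q Ql where PQ: "uniform_limit J P Pl at_top" "uniform_limit J Q Ql at_top"
    "eventually (\<lambda>s. \<forall>i\<in>J. \<bar>H s i - P s i - Q s i\<bar> \<le> e/4) at_top" "\<forall>i\<in>J. \<bar>Lim i - Pl i - Ql i\<bar> \<le> e/4"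
    using assms[of "e/4"] e by auto
  have 1: "eventually (\<lambda>s. \<forall>i\<in>J. dist (P s i) (Pl i) < e/4) at_top" using uniform_limitD[OF PQ(1), of "e/4"] e by simp
  have 2: "eventually (\<lambda>s. \<forall>i\<in>J. dist (Q s i) (Ql i) < e/4) at_top" using uniform_limitD[OF PQ(2), of "e/4"] e by simp
  show "eventually (\<lambda>s. \<forall>i\<in>J. dist (H s i) (Lim i) < e) at_top"
    using 1 2 PQ(3)
  proof eventually_elim
    case (elim s)
    show ?case
    proof
      fix i assume i: "i \<in> J"
      have a: "\<bar>P s i - Pl i\<bar> < e/4" "\<bar>Q s i - Ql i\<bar> < e/4" using elim i by (auto simp: dist_real_def)
      have b: "\<bar>H s i - P s i - Q s i\<bar> \<le> e/4" "\<bar>Lim i - Pl i - Ql i\<bar> \<le> e/4" using elim PQ(4) i by auto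
      show "dist (H s i) (Lim i) < e" using a b by (simp add: dist_real_def abs_if split: if_splits) linarith?
    qed
  qed
qed

lemma int_close:
  fixes F G w :: "'a::euclidean_space \<Rightarrow> real"
  assumes "F \<in> borel_measurable borel" "integrable lborel G" "integrable lborel w"
    and "\<And>z. \<bar>F z - G z\<bar> \<le> \<epsilon> * w z"
  shows "integrable lborel F" "\<bar>(LINT z|lborel. F z) - (LINT z|lborel. G z)\<bar> \<le> \<epsilon> * (LINT z|lborel. w z)"
proof -
  have m: "(\<lambda>z. F z - G z) \<in> borel_measurable lborel" using assms(1,2) by auto
  have iw: "integrable lborel (\<lambda>z. \<epsilon> * w z)" using assms(3) by simp
  have d: "integrable lborel (\<lambda>z. F z - G z)"
    by (rule Bochner_Integration.integrable_bound[OF iw m]) (use assms(4) in \<open>auto intro!: AE_I2 intro: order_trans[OF _ abs_ge_self]\<close>)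
  have "integrable lborel (\<lambda>z. (F z - G z) + G z)" using d assms(2) by (rule Bochner_Integration.integrable_add)
  then show "integrable lborel F" by simp
  then have "(LINT z|lborel. F z) - (LINT z|lborel. G z) = (LINT z|lborel. F z - G z)" using assms(2) by simp
  also have "\<bar>\<dots>\<bar> \<le> (LINT z|lborel. \<bar>F z - G z\<bar>)" by (rule integral_abs_bound)
  also have "\<dots> \<le> (LINT z|lborel. \<epsilon> * w z)" using d iw assms(4) by (intro integral_mono) auto
  finally show "\<bar>(LINT z|lborel. F z) - (LINT z|lborel. G z)\<bar> \<le> \<epsilon> * (LINT z|lborel. w z)" by simp
qed

lemma uniform_limit_cmult_bounded:
  fixes F :: "real \<Rightarrow> 'i \<Rightarrow> real"
  assumes "uniform_limit I F G at_top" "\<And>i. i \<in> I \<Longrightarrow> \<bar>c i\<bar> \<le> K"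
  shows "uniform_limit I (\<lambda>s i. c i * F s i) (\<lambda>i. c i * G i) at_top"
  unfolding uniform_limit_iff
proof (intro allI impI)
  fix e :: real assume e: "e > 0"
  have K: "\<bar>K\<bar> + 1 > 0" by simp
  have "eventually (\<lambda>s. \<forall>i\<in>I. dist (F s i) (G i) < e / (\<bar>K\<bar> + 1)) at_top"
    using uniform_limitD[OF assms(1), of "e / (\<bar>K\<bar> + 1)"] e by simp
  then show "eventually (\<lambda>s. \<forall>i\<in>I. dist (c i * F s i) (c i * G i) < e) at_top"
  proof eventually_elim
    case (elim s)
    show ?case
    proof
      fix i assume i: "i \<in> I"
      have d: "\<bar>F s i - G i\<bar> < e / (\<bar>K\<bar> + 1)" using elim i by (simp add: dist_real_def)
      have "\<bar>c i * F s i - c i * G i\<bar> = \<bar>c i\<bar> * \<bar>F s i - G i\<bar>" by (simp add: abs_mult right_diff_distrib[symmetric])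
      also have "\<dots> \<le> (\<bar>K\<bar> + 1) * \<bar>F s i - G i\<bar>" using assms(2)[OF i] by (intro mult_right_mono) auto
      also have "\<dots> < (\<bar>K\<bar> + 1) * (e / (\<bar>K\<bar> + 1))" using d K by (intro mult_strict_left_mono) auto
      also have "\<dots> = e" using K by simp
      finally show "dist (c i * F s i) (c i * G i) < e" by (simp add: dist_real_def)
    qed
  qed
qed

lemma uniform_limit_finite_sum:
  fixes u :: "nat \<Rightarrow> real \<Rightarrow> 'i \<Rightarrow> real"
  assumes "\<And>n. uniform_limit I (u n) (v n) at_top"
  shows "uniform_limit I (\<lambda>s i. \<Sum>n<N. u n s i) (\<lambda>i. \<Sum>n<N. v n i) at_top"
proof (induction N)
  case 0 then show ?case by (simp add: uniform_limit_const)
next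
  case (Suc N)
  then show ?case using uniform_limit_add[OF Suc assms[of N]] by simp
qed

lemma tannery_unif:
  fixes u :: "nat \<Rightarrow> real \<Rightarrow> 'i \<Rightarrow> real" and v :: "nat \<Rightarrow> 'i \<Rightarrow> real" and m :: "nat \<Rightarrow> real"
  assumes lim: "\<And>n. uniform_limit I (u n) (v n) at_top"
    and m: "summable m"
    and bu: "eventually (\<lambda>s. \<forall>n. \<forall>i\<in>I. \<bar>u n s i\<bar> \<le> m n) at_top"
    and bv: "\<And>n i. i \<in> I \<Longrightarrow> \<bar>v n i\<bar> \<le> m n"
  shows "uniform_limit I (\<lambda>s i. \<Sum>n. u n s i) (\<lambda>i. \<Sum>n. v n i) at_top"
  unfolding uniform_limit_iff
proof (intro allI impI)
  fix e :: real assume e: "e > 0"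
  obtain N where N: "\<And>n. n \<ge> N \<Longrightarrow> norm (\<Sum>i. m (i + n)) < e / 3"
    using suminf_exist_split[OF _ m, of "e/3"] e by auto
  have mN: "(\<Sum>i. m (i + N)) < e / 3" using N[of N] by simp
  have msN: "summable (\<lambda>i. m (i + N))" using m by (rule summable_ignore_initial_segment)
  have fin: "eventually (\<lambda>s. \<forall>i\<in>I. dist (\<Sum>n<N. u n s i) (\<Sum>n<N. v n i) < e / 3) at_top"
    using uniform_limitD[OF uniform_limit_finite_sum[where N=N, OF lim], of "e/3"] e by simp
  show "eventually (\<lambda>s. \<forall>i\<in>I. dist (\<Sum>n. u n s i) (\<Sum>n. v n i) < e) at_top"
    using fin bu
  proof eventually_elim
    case (elim s)
    show ?case
    proof
      fix i assume i: "i \<in> I"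
      have su: "summable (\<lambda>n. u n s i)"
        by (rule summable_comparison_test[OF _ m]) (use elim i in auto)
      have sv: "summable (\<lambda>n. v n i)"
        by (rule summable_comparison_test[OF _ m]) (use bv i in auto)
      have tu: "\<bar>\<Sum>n. u (n + N) s i\<bar> \<le> (\<Sum>n. m (n + N))"
      proof -
        have "summable (\<lambda>n. \<bar>u (n + N) s i\<bar>)"
          by (rule summable_comparison_test[OF _ msN]) (use elim i in auto)
        then have "\<bar>\<Sum>n. u (n + N) s i\<bar> \<le> (\<Sum>n. \<bar>u (n + N) s i\<bar>)" using summable_norm[of "\<lambda>n. u (n + N) s i"] by simp
        also have "\<dots> \<le> (\<Sum>n. m (n + N))"
          by (rule suminf_le) (use elim i msN \<open>summable (\<lambda>n. \<bar>u (n + N) s i\<bar>)\<close> in auto)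
        finally show ?thesis .
      qed
      have tv: "\<bar>\<Sum>n. v (n + N) i\<bar> \<le> (\<Sum>n. m (n + N))"
      proof -
        have sa: "summable (\<lambda>n. \<bar>v (n + N) i\<bar>)"
          by (rule summable_comparison_test[OF _ msN]) (use bv i in auto)
        then have "\<bar>\<Sum>n. v (n + N) i\<bar> \<le> (\<Sum>n. \<bar>v (n + N) i\<bar>)" using summable_norm[of "\<lambda>n. v (n + N) i"] by simp
        also have "\<dots> \<le> (\<Sum>n. m (n + N))"
          by (rule suminf_le) (use bv i msN sa in auto)
        finally show ?thesis .
      qed
      have eu: "(\<Sum>n. u n s i) = (\<Sum>n. u (n + N) s i) + (\<Sum>n<N. u n s i)" by (rule suminf_split_initial_segment[OF su])
      have ev: "(\<Sum>n. v n i) = (\<Sum>n. v (n + N) i) + (\<Sum>n<N. v n i)" by (rule suminf_split_initial_segment[OF sv])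
      have f: "\<bar>(\<Sum>n<N. u n s i) - (\<Sum>n<N. v n i)\<bar> < e / 3" using elim i by (simp add: dist_real_def)
      show "dist (\<Sum>n. u n s i) (\<Sum>n. v n i) < e"
        unfolding dist_real_def eu ev using tu tv f mN by linarith
    qed
  qed
qed

lemma lift_t:
  assumes "uniform_limit X (\<lambda>s (\<theta>, y). F s \<theta> y) (\<lambda>(\<theta>, y). G \<theta> y) at_top" "I \<subseteq> T \<times> X"
  shows "uniform_limit I (\<lambda>s (t::real, \<theta>, y). F s \<theta> y) (\<lambda>(t, \<theta>, y). G \<theta> y) at_top"
  unfolding uniform_limit_iff
proof (intro allI impI)
  fix e :: real assume e: "e > 0"
  have "eventually (\<lambda>s. \<forall>x\<in>X. dist ((\<lambda>(\<theta>, y). F s \<theta> y) x) ((\<lambda>(\<theta>, y). G \<theta> y) x) < e) at_top"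
    using uniform_limitD[OF assms(1) e] .
  then show "eventually (\<lambda>s. \<forall>i\<in>I. dist ((\<lambda>(t::real, \<theta>, y). F s \<theta> y) i) ((\<lambda>(t, \<theta>, y). G \<theta> y) i) < e) at_top"
    by eventually_elim (use assms(2) in force)
qed

locale L7 =
  fixes nu :: "'a::euclidean_space \<Rightarrow> real"
  assumes nu_meas: "nu \<in> borel_measurable lborel"
    and nu_nonneg: "\<And>x. nu x \<ge> 0"
    and nu_finite: "integrable lborel nu"
begin

lemma nu_borel[measurable]: "nu \<in> borel_measurable borel"
  using nu_meas by simp

definition V where "V = (LINT x|lborel. nu x)"

lemma V_nonneg: "V \<ge> 0"
  unfolding V_def using nu_nonneg by (simp add: integral_nonneg_AE)

lemma nn_nu: "(\<integral>\<^sup>+x. ennreal (nu x) \<partial>lborel) = ennreal V"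
  unfolding V_def using nu_finite nu_nonneg by (simp add: nn_integral_eq_integral)

lemma cd_facts:
  "conv_dens nu (Suc n) \<in> borel_measurable borel \<and> (\<forall>x. conv_dens nu (Suc n) x \<ge> 0)"
proof (induction n)
  case 0 then show ?case using nu_nonneg by simp
next
  case (Suc n)
  then have m[measurable]: "conv_dens nu (Suc n) \<in> borel_measurable borel" by blast
  have "(\<lambda>x. LINT y|lborel. conv_dens nu (Suc n) (x - y) * nu y) \<in> borel_measurable borel"
    by measurable
  moreover have "\<forall>x. (LINT y|lborel. conv_dens nu (Suc n) (x - y) * nu y) \<ge> 0"
    using Suc nu_nonneg by (auto intro!: integral_nonneg_AE)
  ultimately show ?case by simp
qed

lemma cd_meas[measurable]: "conv_dens nu (Suc n) \<in> borel_measurable borel"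
  using cd_facts by blast

lemma cd_nonneg: "conv_dens nu (Suc n) x \<ge> 0"
  using cd_facts by blast

lemma cd_step: "conv_dens nu (Suc (Suc n)) x = (LINT y|lborel. conv_dens nu (Suc n) (x - y) * nu y)"
  by simp

lemma cd_step_ennreal:
  assumes "(\<integral>\<^sup>+y. ennreal (conv_dens nu (Suc n) (x - y) * nu y) \<partial>lborel) < \<infinity>"
  shows "ennreal (conv_dens nu (Suc (Suc n)) x) =
     (\<integral>\<^sup>+y. ennreal (conv_dens nu (Suc n) (x - y) * nu y) \<partial>lborel)"
proof -
  have "conv_dens nu (Suc (Suc n)) x =
     enn2real (\<integral>\<^sup>+y. ennreal (conv_dens nu (Suc n) (x - y) * nu y) \<partial>lborel)"
    unfolding cd_step by (rule integral_eq_nn_integral) (auto simp: cd_nonneg nu_nonneg)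
  then show ?thesis using assms by (simp add: ennreal_enn2real)
qed

lemma conv_tonelli:
  fixes g \<phi> :: "'a \<Rightarrow> real"
  assumes [measurable]: "g \<in> borel_measurable borel" "\<phi> \<in> borel_measurable borel"
    and g0: "\<And>x. g x \<ge> 0" and p0: "\<And>x. \<phi> x \<ge> 0"
    and mult: "\<And>x y. \<phi> x = \<phi> (x - y) * \<phi> y"
  shows "(\<integral>\<^sup>+x. (\<integral>\<^sup>+y. ennreal (g (x - y) * nu y) \<partial>lborel) * ennreal (\<phi> x) \<partial>lborel)
       = (\<integral>\<^sup>+x. ennreal (g x * \<phi> x) \<partial>lborel) * (\<integral>\<^sup>+y. ennreal (nu y * \<phi> y) \<partial>lborel)"
proof -
  have "(\<integral>\<^sup>+x. (\<integral>\<^sup>+y. ennreal (g (x - y) * nu y) \<partial>lborel) * ennreal (\<phi> x) \<partial>lborel)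
      = (\<integral>\<^sup>+x. (\<integral>\<^sup>+y. ennreal (g (x - y) * \<phi> (x - y)) * ennreal (nu y * \<phi> y) \<partial>lborel) \<partial>lborel)"
  proof (rule nn_integral_cong)
    fix x
    have "(\<integral>\<^sup>+y. ennreal (g (x - y) * nu y) \<partial>lborel) * ennreal (\<phi> x)
        = (\<integral>\<^sup>+y. ennreal (g (x - y) * nu y) * ennreal (\<phi> x) \<partial>lborel)"
      by (rule nn_integral_multc[symmetric]) measurable
    also have "\<dots> = (\<integral>\<^sup>+y. ennreal (g (x - y) * \<phi> (x - y)) * ennreal (nu y * \<phi> y) \<partial>lborel)"
    proof (rule nn_integral_cong)
      fix y
      have "g (x - y) * nu y * \<phi> x = g (x - y) * \<phi> (x - y) * (nu y * \<phi> y)"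
        using mult[of x y] by (simp add: algebra_simps)
      then show "ennreal (g (x - y) * nu y) * ennreal (\<phi> x) = ennreal (g (x - y) * \<phi> (x - y)) * ennreal (nu y * \<phi> y)"
        using g0 p0 nu_nonneg by (simp add: ennreal_mult'[symmetric] mult_nonneg_nonneg)
    qed
    finally show "(\<integral>\<^sup>+y. ennreal (g (x - y) * nu y) \<partial>lborel) * ennreal (\<phi> x)
        = (\<integral>\<^sup>+y. ennreal (g (x - y) * \<phi> (x - y)) * ennreal (nu y * \<phi> y) \<partial>lborel)" .
  qed
  also have "\<dots> = (\<integral>\<^sup>+y. (\<integral>\<^sup>+x. ennreal (g (x - y) * \<phi> (x - y)) * ennreal (nu y * \<phi> y) \<partial>lborel) \<partial>lborel)"
    by (rule lborel_pair.Fubini'[symmetric]) measurable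
  also have "\<dots> = (\<integral>\<^sup>+y. (\<integral>\<^sup>+x. ennreal (g x * \<phi> x) \<partial>lborel) * ennreal (nu y * \<phi> y) \<partial>lborel)"
  proof (rule nn_integral_cong)
    fix y
    have "(\<integral>\<^sup>+x. ennreal (g (x - y) * \<phi> (x - y)) * ennreal (nu y * \<phi> y) \<partial>lborel)
       = (\<integral>\<^sup>+x. ennreal (g (x - y) * \<phi> (x - y)) \<partial>lborel) * ennreal (nu y * \<phi> y)"
      by (rule nn_integral_multc) measurable
    also have "(\<integral>\<^sup>+x. ennreal (g (x - y) * \<phi> (x - y)) \<partial>lborel) = (\<integral>\<^sup>+x. ennreal (g x * \<phi> x) \<partial>lborel)"
      by (rule nn_integral_shift_lborel[of "\<lambda>x. ennreal (g x * \<phi> x)"]) measurable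
    finally show "(\<integral>\<^sup>+x. ennreal (g (x - y) * \<phi> (x - y)) * ennreal (nu y * \<phi> y) \<partial>lborel)
       = (\<integral>\<^sup>+x. ennreal (g x * \<phi> x) \<partial>lborel) * ennreal (nu y * \<phi> y)" .
  qed
  also have "\<dots> = (\<integral>\<^sup>+x. ennreal (g x * \<phi> x) \<partial>lborel) * (\<integral>\<^sup>+y. ennreal (nu y * \<phi> y) \<partial>lborel)"
    by (rule nn_integral_cmult) measurable
  finally show ?thesis .
qed

lemma cd_total: "(\<integral>\<^sup>+x. ennreal (conv_dens nu (Suc n) x) \<partial>lborel) = ennreal (V ^ Suc n)"
proof (induction n)
  case 0 then show ?case using nn_nu by simp
next
  case (Suc n)
  have T: "(\<integral>\<^sup>+x. (\<integral>\<^sup>+y. ennreal (conv_dens nu (Suc n) (x - y) * nu y) \<partial>lborel) \<partial>lborel)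
      = ennreal (V ^ Suc (Suc n))"
    using conv_tonelli[of "conv_dens nu (Suc n)" "\<lambda>_. 1"] Suc nn_nu V_nonneg
    by (simp add: cd_nonneg ennreal_mult'[symmetric] ennreal_power mult.commute)
  then have "AE x in lborel. (\<integral>\<^sup>+y. ennreal (conv_dens nu (Suc n) (x - y) * nu y) \<partial>lborel) \<noteq> \<infinity>"
    by (intro nn_integral_noteq_infinite) (auto)
  then have "AE x in lborel. ennreal (conv_dens nu (Suc (Suc n)) x) =
     (\<integral>\<^sup>+y. ennreal (conv_dens nu (Suc n) (x - y) * nu y) \<partial>lborel)"
    by eventually_elim (rule cd_step_ennreal, simp add: less_top)
  then show ?case using T by (simp add: nn_integral_cong_AE)
qed

lemma cd_ae: "AE x in lborel. ennreal (conv_dens nu (Suc (Suc n)) x) =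
     (\<integral>\<^sup>+y. ennreal (conv_dens nu (Suc n) (x - y) * nu y) \<partial>lborel)"
proof -
  have T: "(\<integral>\<^sup>+x. (\<integral>\<^sup>+y. ennreal (conv_dens nu (Suc n) (x - y) * nu y) \<partial>lborel) \<partial>lborel)
      = ennreal (V ^ Suc (Suc n))"
    using conv_tonelli[of "conv_dens nu (Suc n)" "\<lambda>_. 1"] cd_total[of n] nn_nu V_nonneg
    by (simp add: cd_nonneg ennreal_mult'[symmetric] ennreal_power mult.commute)
  then have "AE x in lborel. (\<integral>\<^sup>+y. ennreal (conv_dens nu (Suc n) (x - y) * nu y) \<partial>lborel) \<noteq> \<infinity>"
    by (intro nn_integral_noteq_infinite) (auto)
  then show ?thesis
    by eventually_elim (rule cd_step_ennreal, simp add: less_top)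
qed

lemma cd_weighted:
  fixes \<phi> :: "'a \<Rightarrow> real"
  assumes [measurable]: "\<phi> \<in> borel_measurable borel"
    and p0: "\<And>x. \<phi> x \<ge> 0"
    and mult: "\<And>x y. \<phi> x = \<phi> (x - y) * \<phi> y"
  shows "(\<integral>\<^sup>+x. ennreal (conv_dens nu (Suc n) x * \<phi> x) \<partial>lborel) = (\<integral>\<^sup>+x. ennreal (nu x * \<phi> x) \<partial>lborel) ^ Suc n"
proof (induction n)
  case 0 then show ?case by simp
next
  case (Suc n)
  have "(\<integral>\<^sup>+x. ennreal (conv_dens nu (Suc (Suc n)) x * \<phi> x) \<partial>lborel)
      = (\<integral>\<^sup>+x. ennreal (conv_dens nu (Suc (Suc n)) x) * ennreal (\<phi> x) \<partial>lborel)"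
    using p0 cd_nonneg[of "Suc n"] by (intro nn_integral_cong) (simp add: ennreal_mult')
  also have "\<dots> = (\<integral>\<^sup>+x. (\<integral>\<^sup>+y. ennreal (conv_dens nu (Suc n) (x - y) * nu y) \<partial>lborel) * ennreal (\<phi> x) \<partial>lborel)"
    using cd_ae[of n] by (intro nn_integral_cong_AE) (auto)
  also have "\<dots> = (\<integral>\<^sup>+x. ennreal (conv_dens nu (Suc n) x * \<phi> x) \<partial>lborel) * (\<integral>\<^sup>+y. ennreal (nu y * \<phi> y) \<partial>lborel)"
    by (rule conv_tonelli) (auto simp: cd_nonneg p0 intro: mult)
  finally show ?case using Suc by (simp add: mult.commute)
qed

lemma cd_integrable: "integrable lborel (conv_dens nu (Suc n))"
  using cd_total[of n] by (intro integrableI_nonneg) (auto simp: cd_nonneg)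

lemma cd_integral: "(LINT x|lborel. conv_dens nu (Suc n) x) = V ^ Suc n"
proof -
  have "(LINT x|lborel. conv_dens nu (Suc n) x) = enn2real (\<integral>\<^sup>+x. ennreal (conv_dens nu (Suc n) x) \<partial>lborel)"
    by (rule integral_eq_nn_integral) (auto simp: cd_nonneg)
  then show ?thesis using cd_total[of n] V_nonneg by simp
qed

end

locale L7f = L7 nu for nu :: "'a::euclidean_space \<Rightarrow> real" +
  fixes f :: "real \<Rightarrow> real" and C0 :: real and E :: "'a set" and \<kappa> :: real
  assumes f_pos: "\<And>r. r > 0 \<Longrightarrow> f r > 0"
    and f_mono: "\<And>r s. 0 < r \<Longrightarrow> r \<le> s \<Longrightarrow> f s \<le> f r"
    and C0_pos: "C0 > 0"
    and nu_le: "\<And>x. x \<noteq> 0 \<Longrightarrow> nu x \<le> C0 * f (norm x)"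
    and liminf_pos: "Liminf (at_right 0)
          (\<lambda>r. ereal ((set_lebesgue_integral lborel {x. norm x > r} nu) / (f r * r ^ DIM('a)))) > 0"
    and K_lim: "(K_fun TYPE('a) f \<longlongrightarrow> 0) at_top"
    and E_sphere: "E \<subseteq> sphere 0 1"
    and C_lim: "\<And>\<theta> y. \<theta> \<in> E \<Longrightarrow>
          ((\<lambda>r. nu (r *\<^sub>R \<theta> - y) / nu (r *\<^sub>R \<theta>)) \<longlongrightarrow> exp (\<kappa> * (\<theta> \<bullet> y))) at_top"
    and C_inf: "\<exists>c>0. \<forall>x\<in>Gamma_cone E. nu x / f (norm x) \<ge> c"
    and E_ne: "E \<noteq> {}"
    and \<kappa>_nonneg: "\<kappa> \<ge> 0"
    and K_mono: "\<And>r s. 0 < r \<Longrightarrow> r \<le> s \<Longrightarrow> K_fun TYPE('a) f s \<le> K_fun TYPE('a) f r"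
begin

definition cc where "cc = (SOME c. c > 0 \<and> (\<forall>x\<in>Gamma_cone E. nu x / f (norm x) \<ge> c))"

lemma cc: "cc > 0" "\<And>x. x \<in> Gamma_cone E \<Longrightarrow> nu x / f (norm x) \<ge> cc"
  using someI_ex[OF C_inf] unfolding cc_def by auto

lemma E_norm: "\<theta> \<in> E \<Longrightarrow> norm \<theta> = 1"
  using E_sphere by auto

lemma nu_lower: assumes "\<theta> \<in> E" "s > 0" shows "nu (s *\<^sub>R \<theta>) \<ge> cc * f s"
proof -
  have n: "norm (s *\<^sub>R \<theta>) = s" using assms E_norm by simp
  have "s *\<^sub>R \<theta> \<in> Gamma_cone E"
    unfolding Gamma_cone_def using assms n E_norm[OF assms(1)] by auto
  then have "nu (s *\<^sub>R \<theta>) / f s \<ge> cc" using cc(2) n by fastforce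
  then show ?thesis using f_pos[OF assms(2)] by (simp add: pos_le_divide_eq)
qed

lemma nu_pos: assumes "\<theta> \<in> E" "s > 0" shows "nu (s *\<^sub>R \<theta>) > 0"
  using nu_lower[OF assms] cc(1) f_pos[OF assms(2)] by (smt (verit) mult_pos_pos)

lemma f_ratio: assumes "a \<ge> 0" shows "\<exists>L S. L > 0 \<and> S > a \<and> (\<forall>u\<ge>S. f (u - a) \<le> L * f u)"
proof -
  obtain \<theta> where th: "\<theta> \<in> E" using E_ne by blast
  have "((\<lambda>r. nu (r *\<^sub>R \<theta> - a *\<^sub>R \<theta>) / nu (r *\<^sub>R \<theta>)) \<longlongrightarrow> exp (\<kappa> * (\<theta> \<bullet> (a *\<^sub>R \<theta>)))) at_top"
    using C_lim[OF th] by blast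
  then have "eventually (\<lambda>r. nu (r *\<^sub>R \<theta> - a *\<^sub>R \<theta>) / nu (r *\<^sub>R \<theta>) < exp (\<kappa> * (\<theta> \<bullet> (a *\<^sub>R \<theta>))) + 1) at_top"
    by (rule order_tendstoD) simp
  then obtain S0 where S0: "\<And>r. r \<ge> S0 \<Longrightarrow> nu (r *\<^sub>R \<theta> - a *\<^sub>R \<theta>) / nu (r *\<^sub>R \<theta>) < exp (\<kappa> * (\<theta> \<bullet> (a *\<^sub>R \<theta>))) + 1"
    by (auto simp: eventually_at_top_linorder)
  define L where "L = (exp (\<kappa> * (\<theta> \<bullet> (a *\<^sub>R \<theta>))) + 1) * C0 / cc"
  define S where "S = max S0 (a + 1)"
  have "L > 0" unfolding L_def using C0_pos cc(1) by (simp add: add_pos_pos)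
  moreover have "S > a" unfolding S_def by simp
  moreover have "\<forall>u\<ge>S. f (u - a) \<le> L * f u"
  proof (intro allI impI)
    fix u assume u: "u \<ge> S"
    then have ua: "u - a > 0" "u > 0" "u \<ge> S0" unfolding S_def using \<open>a \<ge> 0\<close> by auto
    have eq: "u *\<^sub>R \<theta> - a *\<^sub>R \<theta> = (u - a) *\<^sub>R \<theta>" by (simp add: algebra_simps)
    have p: "nu (u *\<^sub>R \<theta>) > 0" using nu_pos[OF th ua(2)] .
    have "cc * f (u - a) \<le> nu ((u - a) *\<^sub>R \<theta>)" using nu_lower[OF th ua(1)] .
    also have "\<dots> \<le> (exp (\<kappa> * (\<theta> \<bullet> (a *\<^sub>R \<theta>))) + 1) * nu (u *\<^sub>R \<theta>)"
      using S0[OF ua(3)] p unfolding eq by (simp add: divide_less_eq less_imp_le)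
    also have "\<dots> \<le> (exp (\<kappa> * (\<theta> \<bullet> (a *\<^sub>R \<theta>))) + 1) * (C0 * f u)"
    proof -
      have "\<theta> \<noteq> 0" using E_norm[OF th] by auto
      then have "nu (u *\<^sub>R \<theta>) \<le> C0 * f u" using nu_le[of "u *\<^sub>R \<theta>"] ua(2) E_norm[OF th] by simp
      then show ?thesis by (intro mult_left_mono) (auto simp: add_pos_pos less_imp_le)
    qed
    finally show "f (u - a) \<le> L * f u"
      unfolding L_def using cc(1) by (simp add: pos_divide_le_eq field_simps)
  qed
  ultimately show ?thesis by blast
qed

lemma K_bound:
  fixes x :: 'a
  assumes "R > 0" "norm x > 1"
  shows "(\<integral>\<^sup>+y. indicator {y. norm (x - y) > R \<and> norm y > R} y * ennreal (f (norm (x - y)) * f (norm y)) \<partial>lborel)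
     \<le> K_fun TYPE('a) f R * ennreal (f (norm x))"
proof -
  let ?X = "(\<integral>\<^sup>+y. indicator {y. norm (x - y) > R \<and> norm y > R} y * ennreal (f (norm (x - y)) * f (norm y)) \<partial>lborel)"
  have "?X / ennreal (f (norm x)) \<le> K_fun TYPE('a) f R"
    unfolding K_fun_def apply (rule SUP_upper2[of x]) using assms by auto
  then have "?X / ennreal (f (norm x)) * ennreal (f (norm x)) \<le> K_fun TYPE('a) f R * ennreal (f (norm x))"
    by (rule mult_right_mono) simp
  moreover have "?X / ennreal (f (norm x)) * ennreal (f (norm x)) = ?X"
  proof -
    have "x \<noteq> 0" using assms by auto
    then have "f (norm x) > 0" using f_pos[of "norm x"] by simp
    then have "ennreal (f (norm x)) / ennreal (f (norm x)) = 1" by (intro ennreal_divide_self) auto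
    then show ?thesis by (simp add: ennreal_divide_times)
  qed
  ultimately show ?thesis by simp
qed

lemma K_small: assumes "\<epsilon> > 0" shows "\<exists>R0>0. \<forall>R\<ge>R0. K_fun TYPE('a) f R < ennreal \<epsilon>"
proof -
  have "eventually (\<lambda>R. K_fun TYPE('a) f R < ennreal \<epsilon>) at_top"
    using K_lim by (rule order_tendstoD) (use assms in simp)
  then obtain R0 where "\<And>R. R \<ge> R0 \<Longrightarrow> K_fun TYPE('a) f R < ennreal \<epsilon>"
    by (auto simp: eventually_at_top_linorder)
  then show ?thesis by (intro exI[of _ "max R0 1"]) auto
qed

lemma f_small: "\<exists>A r1. A > 0 \<and> r1 > 0 \<and> (\<forall>r. 0 < r \<and> r < r1 \<longrightarrow> f r \<le> A / r ^ DIM('a))"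
proof -
  let ?g = "\<lambda>r. ereal ((set_lebesgue_integral lborel {x. norm x > r} nu) / (f r * r ^ DIM('a)))"
  obtain \<delta> where d: "\<delta> > 0" "ereal \<delta> < Liminf (at_right 0) ?g"
  proof (cases "Liminf (at_right 0) ?g")
    case (real l) then show ?thesis using liminf_pos by (intro that[of "l/2"]) auto
  next
    case PInf then show ?thesis by (intro that[of 1]) auto
  next
    case MInf then show ?thesis using liminf_pos by auto
  qed
  have "eventually (\<lambda>r. ereal \<delta> < ?g r) (at_right 0)"
    by (rule less_LiminfD[OF d(2)])
  then obtain b where b: "b > 0" "\<And>r. 0 < r \<Longrightarrow> r < b \<Longrightarrow> ereal \<delta> < ?g r"
    unfolding eventually_at_right_field by auto
  have "\<forall>r. 0 < r \<and> r < b \<longrightarrow> f r \<le> (V / \<delta>) / r ^ DIM('a)"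
  proof (intro allI impI)
    fix r assume r: "0 < r \<and> r < b"
    have fr: "f r * r ^ DIM('a) > 0" using f_pos r by simp
    have I: "set_lebesgue_integral lborel {x. norm x > r} nu \<le> V"
    proof -
      have "set_lebesgue_integral lborel {x. norm x > r} nu = (LINT x|lborel. nu x * indicator {x. norm x > r} x)"
        unfolding set_lebesgue_integral_def by (simp add: mult.commute)
      also have "\<dots> \<le> (LINT x|lborel. nu x)"
        using nu_finite nu_nonneg
        by (intro integral_mono integrable_real_mult_indicator) (auto simp: indicator_def)
      finally show ?thesis unfolding V_def .
    qed
    have "\<delta> < set_lebesgue_integral lborel {x. norm x > r} nu / (f r * r ^ DIM('a))"
      using b(2)[of r] r by simp
    then have "\<delta> * (f r * r ^ DIM('a)) < set_lebesgue_integral lborel {x. norm x > r} nu"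
      using fr by (simp add: less_divide_eq)
    then have "\<delta> * (f r * r ^ DIM('a)) < V" using I by simp
    then show "f r \<le> (V / \<delta>) / r ^ DIM('a)"
      using d(1) r by (simp add: field_simps)
  qed
  moreover have "V / \<delta> + 1 > 0" using V_nonneg d(1) by (simp add: add_nonneg_pos)
  moreover have "\<forall>r. 0 < r \<and> r < b \<longrightarrow> f r \<le> (V / \<delta> + 1) / r ^ DIM('a)"
  proof (intro allI impI)
    fix r assume r: "0 < r \<and> r < b"
    have "(V / \<delta>) / r ^ DIM('a) \<le> (V / \<delta> + 1) / r ^ DIM('a)"
      using r by (intro divide_right_mono) auto
    then show "f r \<le> (V / \<delta> + 1) / r ^ DIM('a)" using calculation r by (meson order_trans)
  qed
  ultimately show ?thesis using b(1) by blast
qed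


lemma f_meas0: "(\<lambda>r. if 0 < r then f r else f 0) \<in> borel_measurable borel"
proof -
  have "mono_on {0<..} (\<lambda>r. - f r)" by (auto intro!: mono_onI simp: f_mono)
  then have "(\<lambda>r. - f r) \<in> borel_measurable (restrict_space borel {0<..})"
    by (rule borel_measurable_mono_on_fnc)
  then have "(\<lambda>r. - (- f r)) \<in> borel_measurable (restrict_space borel {0<..})"
    by (rule borel_measurable_uminus)
  then have "f \<in> borel_measurable (restrict_space borel {x. 0 < x})" by (simp add: greaterThan_def)
  then show ?thesis by (subst measurable_If_restrict_space_iff) auto
qed

lemma fn_meas[measurable]: "(\<lambda>y::'a. f (norm y)) \<in> borel_measurable borel"
proof -
  have "(\<lambda>y::'a. (\<lambda>r. if 0 < r then f r else f 0) (norm y)) \<in> borel_measurable borel"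
    by (rule measurable_compose[OF _ f_meas0]) simp
  moreover have "(\<lambda>y::'a. (\<lambda>r. if 0 < r then f r else f 0) (norm y)) = (\<lambda>y. f (norm y))"
    by (auto simp: fun_eq_iff)
  ultimately show ?thesis by simp
qed

lemma fn_meas2[measurable]: "(\<lambda>y::'a. f (norm (x - y))) \<in> borel_measurable borel"
  by (rule measurable_compose[OF _ fn_meas]) simp

lemma cd_step_le:
  assumes "(\<integral>\<^sup>+y. ennreal (conv_dens nu (Suc n) (x - y) * nu y) \<partial>lborel) \<le> ennreal b" "b \<ge> 0"
  shows "conv_dens nu (Suc (Suc n)) x \<le> b"
proof -
  let ?X = "(\<integral>\<^sup>+y. ennreal (conv_dens nu (Suc n) (x - y) * nu y) \<partial>lborel)"
  have "conv_dens nu (Suc (Suc n)) x = enn2real ?X"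
    unfolding cd_step by (rule integral_eq_nn_integral) (auto simp: cd_nonneg nu_nonneg)
  also have "\<dots> \<le> enn2real (ennreal b)"
    using assms by (intro enn2real_mono) auto
  finally show ?thesis using assms by simp
qed

lemma cd_step_integrable:
  assumes "(\<integral>\<^sup>+y. ennreal (conv_dens nu (Suc n) (x - y) * nu y) \<partial>lborel) \<le> ennreal b"
  shows "integrable lborel (\<lambda>y. conv_dens nu (Suc n) (x - y) * nu y)"
  using assms by (intro integrableI_nonneg) (auto simp: cd_nonneg nu_nonneg intro: le_less_trans)

lemma nn_lin:
  assumes "a \<ge> 0" "b \<ge> 0"
  shows "(\<integral>\<^sup>+y. ennreal (a * nu y + b * conv_dens nu (Suc n) (x - y)) \<partial>lborel) = ennreal (a * V + b * V ^ Suc n)"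
proof -
  have "(\<integral>\<^sup>+y. ennreal (a * nu y + b * conv_dens nu (Suc n) (x - y)) \<partial>lborel)
     = (\<integral>\<^sup>+y. ennreal a * ennreal (nu y) + ennreal b * ennreal (conv_dens nu (Suc n) (x - y)) \<partial>lborel)"
    using assms by (intro nn_integral_cong) (simp add: ennreal_plus[symmetric] ennreal_mult[symmetric] nu_nonneg cd_nonneg del: ennreal_plus)
  also have "\<dots> = ennreal a * (\<integral>\<^sup>+y. ennreal (nu y) \<partial>lborel) + ennreal b * (\<integral>\<^sup>+y. ennreal (conv_dens nu (Suc n) (x - y)) \<partial>lborel)"
    by (simp add: nn_integral_add nn_integral_cmult)
  also have "(\<integral>\<^sup>+y. ennreal (conv_dens nu (Suc n) (x - y)) \<partial>lborel) = ennreal (V ^ Suc n)"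
    using nn_integral_reflect_lborel[of "\<lambda>y. ennreal (conv_dens nu (Suc n) y)" x] cd_total[of n] by simp
  finally show ?thesis using assms V_nonneg
    by (simp add: nn_nu ennreal_mult[symmetric] ennreal_plus[symmetric] del: ennreal_plus)
qed

definition VV where "VV = max (LINT x|lborel. nu x) 1"

lemma VV: "VV \<ge> 1" "V \<le> VV" unfolding VV_def V_def by auto

lemma cd_mod:
  "\<forall>r w. 0 < r \<longrightarrow> r \<le> norm w \<longrightarrow> conv_dens nu (Suc n) w \<le> real (Suc n) * C0 * VV ^ n * f (r / 2 ^ n)"
proof (induction n)
  case 0
  show ?case
  proof (intro allI impI)
    fix r and w :: 'a assume r: "0 < r" "r \<le> norm w"
    then have "w \<noteq> 0" by auto
    then have "nu w \<le> C0 * f (norm w)" by (rule nu_le)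
    also have "\<dots> \<le> C0 * f r" using r C0_pos by (intro mult_left_mono f_mono) auto
    finally show "conv_dens nu (Suc 0) w \<le> real (Suc 0) * C0 * VV ^ 0 * f (r / 2 ^ 0)" by simp
  qed
next
  case (Suc n)
  show ?case
  proof (intro allI impI)
    fix r and x :: 'a assume r: "0 < r" "r \<le> norm x"
    define \<beta> where "\<beta> = real (Suc n) * C0 * VV ^ n * f ((r/2) / 2 ^ n)"
    have b0: "\<beta> \<ge> 0" unfolding \<beta>_def using C0_pos VV f_pos[of "(r/2) / 2 ^ n"] r by simp
    have fr2: "f (r/2) \<ge> 0" using f_pos[of "r/2"] r by simp
    have pw: "conv_dens nu (Suc n) (x - y) * nu y \<le> \<beta> * nu y + C0 * f (r/2) * conv_dens nu (Suc n) (x - y)" for y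
    proof (cases "norm y < norm x / 2")
      case True
      have "norm (x - y) \<ge> norm x - norm y" by (rule norm_triangle_ineq2)
      then have "r/2 \<le> norm (x - y)" using True r by simp
      then have "conv_dens nu (Suc n) (x - y) \<le> \<beta>" unfolding \<beta>_def using Suc.IH r(1) half_gt_zero by blast
      then have "conv_dens nu (Suc n) (x - y) * nu y \<le> \<beta> * nu y"
        using nu_nonneg by (simp add: mult_right_mono)
      moreover have "0 \<le> C0 * f (r/2) * conv_dens nu (Suc n) (x - y)" using C0_pos fr2 cd_nonneg[of n "x - y"] by simp
      ultimately show ?thesis by linarith
    next
      case False
      then have y: "y \<noteq> 0" "r/2 \<le> norm y" using r by auto
      have "nu y \<le> C0 * f (norm y)" using nu_le[OF y(1)] .
      also have "\<dots> \<le> C0 * f (r/2)" using y r C0_pos by (intro mult_left_mono f_mono) auto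
      finally have "conv_dens nu (Suc n) (x - y) * nu y \<le> conv_dens nu (Suc n) (x - y) * (C0 * f (r/2))"
        using cd_nonneg by (simp add: mult_left_mono)
      moreover have "0 \<le> \<beta> * nu y" using b0 nu_nonneg[of y] by simp
      ultimately show ?thesis by (simp add: algebra_simps)
    qed
    have "(\<integral>\<^sup>+y. ennreal (conv_dens nu (Suc n) (x - y) * nu y) \<partial>lborel)
        \<le> (\<integral>\<^sup>+y. ennreal (\<beta> * nu y + C0 * f (r/2) * conv_dens nu (Suc n) (x - y)) \<partial>lborel)"
      by (intro nn_integral_mono ennreal_leI pw)
    also have "\<dots> = ennreal (\<beta> * V + C0 * f (r/2) * V ^ Suc n)"
      using b0 C0_pos fr2 by (intro nn_lin) auto
    finally have le: "conv_dens nu (Suc (Suc n)) x \<le> \<beta> * V + C0 * f (r/2) * V ^ Suc n"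
      using b0 C0_pos fr2 V_nonneg by (intro cd_step_le) auto
    have e: "(r/2) / 2 ^ n = r / 2 ^ Suc n" by simp
    have f1: "f (r/2) \<le> f (r / 2 ^ Suc n)"
    proof (rule f_mono)
      show "0 < r / 2 ^ Suc n" using r by simp
      have "(1::real) \<le> 2 ^ n" by simp
      then have "r / 2 ^ Suc n \<le> r / 2" using r by (simp add: divide_le_eq field_simps)
      then show "r / 2 ^ Suc n \<le> r / 2" .
    qed
    have fpos: "f (r / 2 ^ Suc n) \<ge> 0" using f_pos[of "r / 2 ^ Suc n"] r by simp
    have t1: "\<beta> * V \<le> real (Suc n) * C0 * VV ^ Suc n * f (r / 2 ^ Suc n)"
    proof -
      have "\<beta> * V = real (Suc n) * C0 * f (r / 2 ^ Suc n) * (VV ^ n * V)" unfolding \<beta>_def e by (simp add: algebra_simps)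
      also have "\<dots> \<le> real (Suc n) * C0 * f (r / 2 ^ Suc n) * (VV ^ n * VV)"
        using VV V_nonneg C0_pos fpos by (intro mult_left_mono) auto
      finally show ?thesis by (simp add: algebra_simps)
    qed
    have t2: "C0 * f (r/2) * V ^ Suc n \<le> C0 * VV ^ Suc n * f (r / 2 ^ Suc n)"
    proof -
      have "V ^ Suc n \<le> VV ^ Suc n" using VV V_nonneg by (intro power_mono) auto
      then have "C0 * f (r/2) * V ^ Suc n \<le> C0 * f (r / 2 ^ Suc n) * VV ^ Suc n"
        using f1 C0_pos fr2 V_nonneg by (intro mult_mono) auto
      then show ?thesis by (simp add: algebra_simps)
    qed
    show "conv_dens nu (Suc (Suc n)) x \<le> real (Suc (Suc n)) * C0 * VV ^ Suc n * f (r / 2 ^ Suc n)"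
      using le t1 t2 by (simp add: algebra_simps)
  qed
qed


lemma cd_mod_geom:
  assumes R1: "R1 > 0"
  shows "\<exists>F0 B1. F0 \<ge> 0 \<and> B1 \<ge> 1 \<and> (\<forall>n w. R1 \<le> norm w \<longrightarrow> conv_dens nu (Suc n) w \<le> F0 * B1 ^ n)"
proof -
  obtain A0 r1 where A0: "A0 > 0" "r1 > 0" "\<And>r. 0 < r \<Longrightarrow> r < r1 \<Longrightarrow> f r \<le> A0 / r ^ DIM('a)"
    using f_small by blast
  define G where "G = A0 / R1 ^ DIM('a) + f r1"
  have G0: "A0 / R1 ^ DIM('a) \<ge> 0" "f r1 \<ge> 0" using A0 R1 f_pos[of r1] by auto
  have fb: "f (R1 / 2 ^ n) \<le> G * (2 ^ DIM('a)) ^ n" for n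
  proof -
    have p1: "(1::real) \<le> (2 ^ DIM('a)) ^ n" by (simp add: one_le_power)
    have pos: "R1 / 2 ^ n > 0" using R1 by simp
    show ?thesis
    proof (cases "R1 / 2 ^ n < r1")
      case True
      have "f (R1 / 2 ^ n) \<le> A0 / (R1 / 2 ^ n) ^ DIM('a)" using A0(3)[OF pos True] .
      also have "\<dots> = A0 / R1 ^ DIM('a) * (2 ^ DIM('a)) ^ n"
        using R1 by (simp add: power_divide field_simps power_mult[symmetric] mult.commute)
      also have "\<dots> \<le> G * (2 ^ DIM('a)) ^ n" unfolding G_def using G0 by (intro mult_right_mono) auto
      finally show ?thesis .
    next
      case False
      then have "f (R1 / 2 ^ n) \<le> f r1" using A0(2) by (intro f_mono) auto
      also have "\<dots> \<le> G * 1" unfolding G_def using G0 by simp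
      also have "\<dots> \<le> G * (2 ^ DIM('a)) ^ n" using p1 G0 unfolding G_def by (intro mult_left_mono) auto
      finally show ?thesis .
    qed
  qed
  define B1 :: real where "B1 = 2 * VV * 2 ^ DIM('a)"
  have B1: "B1 \<ge> 1" unfolding B1_def using VV
    by (metis (no_types, opaque_lifting) less_eq_real_def mult_ge1_I one_le_numeral one_le_power)
  have G00: "G \<ge> 0" unfolding G_def using G0 by simp
  have "conv_dens nu (Suc n) w \<le> (C0 * G) * B1 ^ n" if w: "R1 \<le> norm w" for n w
  proof -
    have "conv_dens nu (Suc n) w \<le> real (Suc n) * C0 * VV ^ n * f (R1 / 2 ^ n)"
      using cd_mod[of n] R1 w by blast
    also have "\<dots> \<le> 2 ^ n * C0 * VV ^ n * (G * (2 ^ DIM('a)) ^ n)"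
    proof (intro mult_mono)
      show "real (Suc n) \<le> 2 ^ n" 
        by (metis Suc_leI less_exp of_nat_le_iff of_nat_numeral of_nat_power)
    qed (use C0_pos VV fb f_pos[of "R1 / 2 ^ n"] R1 G00 in auto)
    also have "\<dots> = (C0 * G) * B1 ^ n" unfolding B1_def by (simp add: power_mult_distrib algebra_simps)
    finally show ?thesis .
  qed
  then show ?thesis using B1 G00 C0_pos by (intro exI[of _ "C0 * G"] exI[of _ B1]) auto
qed

lemma sharp: "\<exists>R1 A B. R1 \<ge> 1 \<and> A \<ge> 1 \<and> B \<ge> 1 \<and> K_fun TYPE('a) f R1 < 1 \<and>
   (\<forall>n w. R1 \<le> norm w \<longrightarrow> conv_dens nu (Suc n) w \<le> A * B ^ Suc n * f (norm w))"
proof -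
  obtain R0 where R0: "R0 > 0" "\<And>R. R \<ge> R0 \<Longrightarrow> K_fun TYPE('a) f R < ennreal 1"
    using K_small[of 1] by auto
  define R1 where "R1 = max R0 1"
  have R1: "R1 \<ge> 1" "K_fun TYPE('a) f R1 < 1" unfolding R1_def using R0 by auto
  obtain L S where LS: "L > 0" "S > R1" "\<And>u. u \<ge> S \<Longrightarrow> f (u - R1) \<le> L * f u"
    using f_ratio[of R1] R1 by auto
  obtain F0 B1 where FB: "F0 \<ge> 0" "B1 \<ge> 1" "\<And>n w. R1 \<le> norm w \<Longrightarrow> conv_dens nu (Suc n) w \<le> F0 * B1 ^ n"
    using cd_mod_geom[of R1] R1 by auto
  define T where "T = max S (2 * R1) + 1"
  have T: "T > S" "T \<ge> 2 * R1" "T > 1" unfolding T_def using R1 by auto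
  have fT: "f T > 0" using f_pos T by simp
  define A where "A = max 1 (F0 / f T)"
  define B where "B = B1 + VV + L * V + C0 * L + C0"
  have A: "A \<ge> 1" "A \<ge> F0 / f T" unfolding A_def by auto
  have B: "B \<ge> B1" "B \<ge> VV" "B \<ge> L * V + C0 * L + C0" "B \<ge> 1" "B \<ge> C0"
  proof -
    have "L * V \<ge> 0" "C0 * L \<ge> 0" using V_nonneg LS C0_pos by auto
    then show "B \<ge> B1" "B \<ge> VV" "B \<ge> L * V + C0 * L + C0" "B \<ge> 1" "B \<ge> C0"
      unfolding B_def using FB(2) VV C0_pos by linarith+
  qed
  have main: "\<forall>w. R1 \<le> norm w \<longrightarrow> conv_dens nu (Suc n) w \<le> A * B ^ Suc n * f (norm w)" for n
  proof (induction n)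
    case 0
    show ?case
    proof (intro allI impI)
      fix w :: 'a assume w: "R1 \<le> norm w"
      then have "w \<noteq> 0" using R1 by auto
      then have "nu w \<le> C0 * f (norm w)" by (rule nu_le)
      also have "\<dots> \<le> (A * B) * f (norm w)"
      proof (rule mult_right_mono)
        have "B \<le> A * B" using A B by (simp add: mult_le_cancel_right1)
        then show "C0 \<le> A * B" using B(5) by linarith
        show "0 \<le> f (norm w)" using f_pos[of "norm w"] \<open>w \<noteq> 0\<close> by simp
      qed
      finally show "conv_dens nu (Suc 0) w \<le> A * B ^ Suc 0 * f (norm w)" by simp
    qed
  next
    case (Suc n)
    show ?case
    proof (intro allI impI)
      fix x :: 'a assume x: "R1 \<le> norm x"
      have fx: "f (norm x) > 0" using x R1 by (intro f_pos) linarith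
      have ABn: "A * B ^ Suc n \<ge> 1" using A B by (simp add: one_le_power mult_ge1_I)
      show "conv_dens nu (Suc (Suc n)) x \<le> A * B ^ Suc (Suc n) * f (norm x)"
      proof (cases "norm x \<le> T")
        case True
        have "conv_dens nu (Suc (Suc n)) x \<le> F0 * B1 ^ Suc n" using FB(3) x by blast
        also have "\<dots> \<le> (F0 / f T) * f (norm x) * B1 ^ Suc n"
        proof -
          have "f T \<le> f (norm x)" using True x R1 by (intro f_mono) auto
          then have "F0 \<le> (F0 / f T) * f (norm x)" using fT FB(1)
            by (simp add: field_simps mult_left_mono)
          then show ?thesis using FB(2) by (intro mult_right_mono) auto
        qed
        also have "\<dots> \<le> A * f (norm x) * B ^ Suc (Suc n)"
        proof (intro mult_mono)
          show "B1 ^ Suc n \<le> B ^ Suc (Suc n)"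
          proof -
            have "B1 ^ Suc n \<le> B ^ Suc n" using B FB by (intro power_mono) auto
            also have "\<dots> \<le> B ^ Suc (Suc n)" using B by (intro power_increasing) auto
            finally show ?thesis .
          qed
        qed (use A fx FB fT in auto)
        finally show ?thesis by (simp add: algebra_simps)
      next
        case False
        then have xT: "norm x > T" by simp
        define P1 where "P1 = A * B ^ Suc n * L * f (norm x)"
        define P2 where "P2 = C0 * L * f (norm x)"
        define Q where "Q = A * B ^ Suc n * C0"
        let ?S = "{y. norm (x - y) > R1 \<and> norm y > R1}"
        have P0: "P1 \<ge> 0" "P2 \<ge> 0" "Q \<ge> 0" unfolding P1_def P2_def Q_def using A B LS C0_pos fx by auto
        have fxR: "f (norm x - R1) \<le> L * f (norm x)" using LS(3) xT T by simp
        have xR: "norm x - R1 > 0" "norm x - R1 \<ge> R1" using xT T R1 by auto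
        have pw: "ennreal (conv_dens nu (Suc n) (x - y) * nu y) \<le>
            ennreal (P1 * nu y + P2 * conv_dens nu (Suc n) (x - y)) +
            ennreal Q * (indicator ?S y * ennreal (f (norm (x - y)) * f (norm y)))" for y
        proof -
          have g0: "conv_dens nu (Suc n) (x - y) \<ge> 0" "nu y \<ge> 0" using cd_nonneg nu_nonneg by auto
          consider "norm y \<le> R1" | "norm (x - y) \<le> R1" | "y \<in> ?S" by force
          then show ?thesis
          proof cases
            case 1
            have d: "norm (x - y) \<ge> norm x - R1" using norm_triangle_ineq2[of x y] 1 by simp
            have "conv_dens nu (Suc n) (x - y) \<le> A * B ^ Suc n * f (norm (x - y))"
              using Suc.IH d xR by auto
            also have "\<dots> \<le> A * B ^ Suc n * (L * f (norm x))"
              using f_mono[OF xR(1) d] fxR ABn by (intro mult_left_mono) auto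
            finally have "conv_dens nu (Suc n) (x - y) \<le> A * B ^ Suc n * (L * f (norm x))" .
            then have "conv_dens nu (Suc n) (x - y) * nu y \<le> (A * B ^ Suc n * (L * f (norm x))) * nu y"
              using g0 by (intro mult_right_mono) auto
            then have "conv_dens nu (Suc n) (x - y) * nu y \<le> P1 * nu y"
              unfolding P1_def by (simp add: algebra_simps)
            then have "conv_dens nu (Suc n) (x - y) * nu y \<le> P1 * nu y + P2 * conv_dens nu (Suc n) (x - y)"
              using P0 g0 by (smt (verit) mult_nonneg_nonneg)
            then show ?thesis by (intro order_trans[OF ennreal_leI add_increasing2]) auto
          next
            case 2
            have d: "norm y \<ge> norm x - R1" using norm_triangle_ineq2[of x "x - y"] 2 by simp
            then have y0: "y \<noteq> 0" using xR by auto
            have "nu y \<le> C0 * f (norm y)" using nu_le[OF y0] .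
            also have "\<dots> \<le> C0 * (L * f (norm x))"
              using f_mono[OF xR(1) d] fxR C0_pos by (intro mult_left_mono) auto
            finally have "nu y \<le> C0 * (L * f (norm x))" .
            then have "conv_dens nu (Suc n) (x - y) * nu y \<le> conv_dens nu (Suc n) (x - y) * (C0 * (L * f (norm x)))"
              using g0 by (intro mult_left_mono) auto
            then have "conv_dens nu (Suc n) (x - y) * nu y \<le> P2 * conv_dens nu (Suc n) (x - y)"
              unfolding P2_def by (simp add: algebra_simps)
            then have "conv_dens nu (Suc n) (x - y) * nu y \<le> P1 * nu y + P2 * conv_dens nu (Suc n) (x - y)"
              using P0 g0 by (smt (verit) mult_nonneg_nonneg)
            then show ?thesis by (intro order_trans[OF ennreal_leI add_increasing2]) auto
          next
            case 3
            then have y: "norm (x - y) > R1" "norm y > R1" by auto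
            then have y0: "y \<noteq> 0" using R1 by auto
            have c1: "conv_dens nu (Suc n) (x - y) \<le> A * B ^ Suc n * f (norm (x - y))"
              using Suc.IH y by auto
            have c2: "nu y \<le> C0 * f (norm y)" using nu_le[OF y0] .
            have "conv_dens nu (Suc n) (x - y) * nu y \<le> (A * B ^ Suc n * f (norm (x - y))) * (C0 * f (norm y))"
              using c1 c2 g0 by (intro mult_mono) auto
            also have "\<dots> = Q * (f (norm (x - y)) * f (norm y))" unfolding Q_def by (simp add: algebra_simps)
            finally have le0: "conv_dens nu (Suc n) (x - y) * nu y \<le> Q * (f (norm (x - y)) * f (norm y))" .
            have "ennreal (conv_dens nu (Suc n) (x - y) * nu y) \<le> ennreal Q * (indicator ?S y * ennreal (f (norm (x - y)) * f (norm y)))"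
            proof -
              have "f (norm (x - y)) > 0" "f (norm y) > 0" using y R1 by (intro f_pos; linarith)+
              then have ff: "f (norm (x - y)) * f (norm y) \<ge> 0" by simp
              have "ennreal Q * ennreal (f (norm (x - y)) * f (norm y)) = ennreal (Q * (f (norm (x - y)) * f (norm y)))"
                using ff P0 by (simp add: ennreal_mult)
              then show ?thesis using 3 le0 by (simp add: ennreal_leI)
            qed
            then show ?thesis by (rule order_trans) simp
          qed
        qed
        have "(\<integral>\<^sup>+y. ennreal (conv_dens nu (Suc n) (x - y) * nu y) \<partial>lborel)
          \<le> (\<integral>\<^sup>+y. ennreal (P1 * nu y + P2 * conv_dens nu (Suc n) (x - y)) +
            ennreal Q * (indicator ?S y * ennreal (f (norm (x - y)) * f (norm y))) \<partial>lborel)"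
          by (intro nn_integral_mono pw)
        also have "\<dots> = (\<integral>\<^sup>+y. ennreal (P1 * nu y + P2 * conv_dens nu (Suc n) (x - y)) \<partial>lborel) +
            ennreal Q * (\<integral>\<^sup>+y. indicator ?S y * ennreal (f (norm (x - y)) * f (norm y)) \<partial>lborel)"
          by (simp add: nn_integral_add nn_integral_cmult)
        also have "\<dots> \<le> ennreal (P1 * V + P2 * V ^ Suc n) + ennreal Q * (K_fun TYPE('a) f R1 * ennreal (f (norm x)))"
          using nn_lin[OF P0(1,2), of n x] K_bound[of R1 x] R1 xT T
          by (intro add_mono mult_left_mono) auto
        also have "\<dots> \<le> ennreal (P1 * V + P2 * V ^ Suc n) + ennreal Q * (1 * ennreal (f (norm x)))"
          using R1(2) by (intro add_mono mult_left_mono mult_right_mono) auto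
        also have "\<dots> = ennreal (P1 * V + P2 * V ^ Suc n + Q * f (norm x))"
          using P0 fx V_nonneg by (simp add: ennreal_mult[symmetric] ennreal_plus[symmetric] del: ennreal_plus)
        finally have le: "conv_dens nu (Suc (Suc n)) x \<le> P1 * V + P2 * V ^ Suc n + Q * f (norm x)"
          using P0 fx V_nonneg by (intro cd_step_le) auto
        have "P2 * V ^ Suc n \<le> C0 * L * f (norm x) * (A * B ^ Suc n)"
        proof -
          have "V ^ Suc n \<le> B ^ Suc n" using V_nonneg VV B by (intro power_mono) auto
          also have "\<dots> \<le> A * B ^ Suc n"
          proof -
            have "B ^ Suc n \<ge> 0" using B by simp
            then have "1 * B ^ Suc n \<le> A * B ^ Suc n" using A(1) by (intro mult_right_mono) auto
            then show ?thesis by simp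
          qed
          finally show ?thesis unfolding P2_def using C0_pos LS fx
            by (intro mult_left_mono) (auto)
        qed
        then have "P1 * V + P2 * V ^ Suc n + Q * f (norm x) \<le> (A * B ^ Suc n * f (norm x)) * (L * V + C0 * L + C0)"
          unfolding P1_def Q_def by (simp add: algebra_simps)
        also have "\<dots> \<le> (A * B ^ Suc n * f (norm x)) * B"
          using B ABn fx by (intro mult_left_mono) auto
        finally show ?thesis using le by (simp add: algebra_simps)
      qed
    qed
  qed
  show ?thesis using R1 A B main by blast
qed


lemma tailF:
  assumes th: "\<theta> \<in> E" and R: "R > 0"
  shows "(\<integral>\<^sup>+w. indicator {w. norm w > R} w * ennreal (exp (\<kappa> * (\<theta> \<bullet> w)) * f (norm w)) \<partial>lborel)
     \<le> ennreal (C0 / cc) * K_fun TYPE('a) f R"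
proof -
  define u where "u n w = indicator {w. norm (real n *\<^sub>R \<theta> - w) > R \<and> norm w > R} w *
     ennreal (nu (real n *\<^sub>R \<theta> - w) / nu (real n *\<^sub>R \<theta>) * f (norm w))" for n w
  have nth: "norm \<theta> = 1" using E_norm[OF th] .
  have um: "u n \<in> borel_measurable lborel" for n
    unfolding u_def by measurable
  have lim: "(\<lambda>n. u n w) \<longlonglongrightarrow> indicator {w. norm w > R} w * ennreal (exp (\<kappa> * (\<theta> \<bullet> w)) * f (norm w))" for w
  proof (cases "norm w > R")
    case False
    then show ?thesis unfolding u_def by simp
  next
    case True
    have ev: "eventually (\<lambda>n. norm (real n *\<^sub>R \<theta> - w) > R) sequentially"
    proof -
      obtain N :: nat where N: "real N > R + norm w" using reals_Archimedean2 by blast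
      show ?thesis unfolding eventually_sequentially
      proof (intro exI allI impI)
        fix n assume "N \<le> n"
        then have "real n > R + norm w" using N by (meson less_le_trans of_nat_le_iff)
        moreover have "norm (real n *\<^sub>R \<theta> - w) \<ge> norm (real n *\<^sub>R \<theta>) - norm w" by (rule norm_triangle_ineq2)
        ultimately show "norm (real n *\<^sub>R \<theta> - w) > R" using nth by simp
      qed
    qed
    have r: "(\<lambda>n. nu (real n *\<^sub>R \<theta> - w) / nu (real n *\<^sub>R \<theta>)) \<longlonglongrightarrow> exp (\<kappa> * (\<theta> \<bullet> w))"
      using filterlim_compose[OF C_lim[OF th, of w] filterlim_real_sequentially] by simp
    have "(\<lambda>n. ennreal (nu (real n *\<^sub>R \<theta> - w) / nu (real n *\<^sub>R \<theta>) * f (norm w))) \<longlonglongrightarrow> ennreal (exp (\<kappa> * (\<theta> \<bullet> w)) * f (norm w))"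
      by (intro tendsto_ennrealI tendsto_mult_right r)
    moreover have "eventually (\<lambda>n. ennreal (nu (real n *\<^sub>R \<theta> - w) / nu (real n *\<^sub>R \<theta>) * f (norm w)) = u n w) sequentially"
      using ev by eventually_elim (use True in \<open>simp add: u_def\<close>)
    ultimately show ?thesis using True by (simp add: tendsto_cong)
  qed
  have bnd: "(\<integral>\<^sup>+w. u n w \<partial>lborel) \<le> ennreal (C0 / cc) * K_fun TYPE('a) f R" if n: "n \<ge> 2" for n
  proof -
    let ?x = "real n *\<^sub>R \<theta>"
    let ?S = "{w. norm (?x - w) > R \<and> norm w > R}"
    have nx: "norm ?x = real n" using nth by simp
    have npos: "real n > 0" using n by simp
    have fn: "f (real n) > 0" using f_pos npos by simp
    have nux: "nu ?x \<ge> cc * f (real n)" using nu_lower[OF th npos] .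
    have nuxp: "nu ?x > 0" using nu_pos[OF th npos] .
    have pw: "u n w \<le> ennreal (C0 / (cc * f (real n))) * (indicator ?S w * ennreal (f (norm (?x - w)) * f (norm w)))" for w
    proof (cases "w \<in> ?S")
      case False then show ?thesis unfolding u_def by simp
    next
      case True
      then have w0: "?x - w \<noteq> 0" "w \<noteq> 0" using R by auto
      have fw: "f (norm w) > 0" "f (norm (?x - w)) > 0" using w0 f_pos by auto
      have "nu (?x - w) / nu ?x \<le> C0 * f (norm (?x - w)) / (cc * f (real n))"
      proof (rule frac_le)
        show "0 \<le> C0 * f (norm (?x - w))" using C0_pos fw by simp
        show "nu (?x - w) \<le> C0 * f (norm (?x - w))" using nu_le[OF w0(1)] .
        show "0 < cc * f (real n)" using cc(1) fn by simp
      qed (use nux in auto)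
      then have "nu (?x - w) / nu ?x * f (norm w) \<le> C0 * f (norm (?x - w)) / (cc * f (real n)) * f (norm w)"
        using fw by (intro mult_right_mono) auto
      also have "\<dots> = C0 / (cc * f (real n)) * (f (norm (?x - w)) * f (norm w))" by simp
      finally have "nu (?x - w) / nu ?x * f (norm w) \<le> C0 / (cc * f (real n)) * (f (norm (?x - w)) * f (norm w))" .
      then show ?thesis using True fw C0_pos cc(1) fn
        by (simp add: u_def ennreal_mult[symmetric] ennreal_leI)
    qed
    have "(\<integral>\<^sup>+w. u n w \<partial>lborel) \<le> (\<integral>\<^sup>+w. ennreal (C0 / (cc * f (real n))) * (indicator ?S w * ennreal (f (norm (?x - w)) * f (norm w))) \<partial>lborel)"
      by (intro nn_integral_mono pw)
    also have "\<dots> = ennreal (C0 / (cc * f (real n))) * (\<integral>\<^sup>+w. indicator ?S w * ennreal (f (norm (?x - w)) * f (norm w)) \<partial>lborel)"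
      by (rule nn_integral_cmult) measurable
    also have "\<dots> \<le> ennreal (C0 / (cc * f (real n))) * (K_fun TYPE('a) f R * ennreal (f (norm ?x)))"
      using K_bound[OF R, of ?x] nx n by (intro mult_left_mono) auto
    also have "\<dots> = K_fun TYPE('a) f R * (ennreal (C0 / (cc * f (real n))) * ennreal (f (real n)))"
      unfolding nx by (simp add: ac_simps)
    also have "ennreal (C0 / (cc * f (real n))) * ennreal (f (real n)) = ennreal (C0 / cc)"
      using C0_pos cc(1) fn by (simp add: ennreal_mult[symmetric])
    finally show ?thesis by (simp add: mult.commute)
  qed
  have "(\<integral>\<^sup>+w. indicator {w. norm w > R} w * ennreal (exp (\<kappa> * (\<theta> \<bullet> w)) * f (norm w)) \<partial>lborel)
      = (\<integral>\<^sup>+w. liminf (\<lambda>n. u n w) \<partial>lborel)"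
    by (intro nn_integral_cong) (rule lim_imp_Liminf[symmetric, OF _ lim], simp)
  also have "\<dots> \<le> liminf (\<lambda>n. \<integral>\<^sup>+w. u n w \<partial>lborel)"
    by (rule nn_integral_liminf) (use um in simp)
  also have "\<dots> \<le> ennreal (C0 / cc) * K_fun TYPE('a) f R"
    by (rule Liminf_le) (auto simp: eventually_sequentially intro!: exI[of _ 2] bnd)
  finally show ?thesis .
qed

end


locale L7c = L7f nu f C0 E \<kappa> for nu :: "'a::euclidean_space \<Rightarrow> real" and f C0 E \<kappa> +
  fixes R1 A B :: real
  assumes R1_ge: "R1 \<ge> 1" and A_ge: "A \<ge> 1" and B_ge: "B \<ge> 1"
    and K_R1: "K_fun TYPE('a) f R1 < 1"
    and cd_sharp: "\<And>n w. R1 \<le> norm w \<Longrightarrow> conv_dens nu (Suc n) w \<le> A * B ^ Suc n * f (norm w)"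
begin

abbreviation ee :: "'a \<Rightarrow> 'a \<Rightarrow> real" where "ee \<theta> z \<equiv> exp (\<kappa> * (\<theta> \<bullet> z))"

lemma ee_mult: "ee \<theta> x = ee \<theta> (x - y) * ee \<theta> y"
  by (simp add: inner_diff_right algebra_simps exp_add[symmetric])

lemma ee_add: "ee \<theta> (y + z) = ee \<theta> y * ee \<theta> z"
  by (simp add: inner_add_right algebra_simps exp_add[symmetric])

lemma ee_meas[measurable]: "(\<lambda>z. ee \<theta> z) \<in> borel_measurable borel"
  by measurable

lemma ee_le: assumes "\<theta> \<in> E" "norm z \<le> r" shows "ee \<theta> z \<le> exp (\<kappa> * r)"
proof -
  have "\<theta> \<bullet> z \<le> norm \<theta> * norm z" by (rule norm_cauchy_schwarz)
  then have "\<theta> \<bullet> z \<le> r" using E_norm[OF assms(1)] assms(2) by simp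
  then show ?thesis using \<kappa>_nonneg by (simp add: mult_left_mono)
qed

definition kk where "kk R = enn2real (K_fun TYPE('a) f R)"

lemma K_le: "R \<ge> R1 \<Longrightarrow> K_fun TYPE('a) f R = ennreal (kk R) \<and> kk R \<ge> 0 \<and> kk R \<le> 1"
proof -
  assume R: "R \<ge> R1"
  have "K_fun TYPE('a) f R \<le> K_fun TYPE('a) f R1" using K_mono[of R1 R] R R1_ge by simp
  then have lt: "K_fun TYPE('a) f R < 1" using K_R1 by simp
  then have "K_fun TYPE('a) f R \<noteq> \<infinity>" by (auto simp: top_unique)
  then have eq: "K_fun TYPE('a) f R = ennreal (kk R)" unfolding kk_def by (simp add: ennreal_enn2real less_top)
  moreover have "kk R \<le> 1" using lt eq by (metis ennreal_le_1 less_imp_le)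
  ultimately show ?thesis unfolding kk_def by simp
qed

lemma kk_lim: "(kk \<longlongrightarrow> 0) at_top"
proof -
  have "(K_fun TYPE('a) f \<longlongrightarrow> ennreal 0) at_top" using K_lim by simp
  then have "((\<lambda>R. enn2real (K_fun TYPE('a) f R)) \<longlongrightarrow> 0) at_top"
    by (rule tendsto_enn2real) simp
  then show ?thesis unfolding kk_def by simp
qed

lemma tail_nu_nn:
  assumes th: "\<theta> \<in> E" and R: "R \<ge> R1"
  shows "(\<integral>\<^sup>+w. indicator {w. norm w > R} w * ennreal (ee \<theta> w * nu w) \<partial>lborel) \<le> ennreal (C0 * (C0 / cc) * kk R)"
proof -
  have "(\<integral>\<^sup>+w. indicator {w. norm w > R} w * ennreal (ee \<theta> w * nu w) \<partial>lborel)
     \<le> (\<integral>\<^sup>+w. ennreal C0 * (indicator {w. norm w > R} w * ennreal (ee \<theta> w * f (norm w))) \<partial>lborel)"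
  proof (intro nn_integral_mono)
    fix w show "indicator {w. norm w > R} w * ennreal (ee \<theta> w * nu w) \<le> ennreal C0 * (indicator {w. norm w > R} w * ennreal (ee \<theta> w * f (norm w)))"
    proof (cases "norm w > R")
      case True
      then have "w \<noteq> 0" using R R1_ge by auto
      then have "ee \<theta> w * nu w \<le> C0 * (ee \<theta> w * f (norm w))" using nu_le[of w] by (simp add: algebra_simps)
      moreover have "f (norm w) > 0" using \<open>w \<noteq> 0\<close> f_pos by simp
      ultimately show ?thesis using True C0_pos by (simp add: ennreal_mult[symmetric] ennreal_leI)
    qed simp
  qed
  also have "\<dots> = ennreal C0 * (\<integral>\<^sup>+w. indicator {w. norm w > R} w * ennreal (ee \<theta> w * f (norm w)) \<partial>lborel)"
    by (rule nn_integral_cmult) measurable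
  also have "\<dots> \<le> ennreal C0 * (ennreal (C0 / cc) * K_fun TYPE('a) f R)"
    using tailF[OF th, of R] R R1_ge by (intro mult_left_mono) auto
  also have "\<dots> = ennreal (C0 * (C0 / cc) * kk R)"
    using K_le[OF R] C0_pos cc(1) by (simp add: ennreal_mult[symmetric] mult.assoc)
  finally show ?thesis .
qed

lemma tail_cd_nn:
  assumes th: "\<theta> \<in> E" and R: "R \<ge> R1"
  shows "(\<integral>\<^sup>+w. indicator {w. norm w > R} w * ennreal (conv_dens nu (Suc n) w * ee \<theta> w) \<partial>lborel)
     \<le> ennreal (A * B ^ Suc n * (C0 / cc) * kk R)"
proof -
  have G0: "A * B ^ Suc n \<ge> 0" using A_ge B_ge by simp
  have "(\<integral>\<^sup>+w. indicator {w. norm w > R} w * ennreal (conv_dens nu (Suc n) w * ee \<theta> w) \<partial>lborel)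
     \<le> (\<integral>\<^sup>+w. ennreal (A * B ^ Suc n) * (indicator {w. norm w > R} w * ennreal (ee \<theta> w * f (norm w))) \<partial>lborel)"
  proof (intro nn_integral_mono)
    fix w show "indicator {w. norm w > R} w * ennreal (conv_dens nu (Suc n) w * ee \<theta> w) \<le> ennreal (A * B ^ Suc n) * (indicator {w. norm w > R} w * ennreal (ee \<theta> w * f (norm w)))"
    proof (cases "norm w > R")
      case True
      then have "w \<noteq> 0" using R R1_ge by auto
      have "conv_dens nu (Suc n) w \<le> A * B ^ Suc n * f (norm w)" using cd_sharp[of w n] True R by simp
      then have "conv_dens nu (Suc n) w * ee \<theta> w \<le> A * B ^ Suc n * (ee \<theta> w * f (norm w))"
        by (simp add: algebra_simps)
      moreover have "f (norm w) > 0" using \<open>w \<noteq> 0\<close> f_pos by simp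
      ultimately show ?thesis using True G0 by (simp add: ennreal_mult[symmetric] ennreal_leI)
    qed simp
  qed
  also have "\<dots> = ennreal (A * B ^ Suc n) * (\<integral>\<^sup>+w. indicator {w. norm w > R} w * ennreal (ee \<theta> w * f (norm w)) \<partial>lborel)"
    by (rule nn_integral_cmult) measurable
  also have "\<dots> \<le> ennreal (A * B ^ Suc n) * (ennreal (C0 / cc) * K_fun TYPE('a) f R)"
    using tailF[OF th, of R] R R1_ge by (intro mult_left_mono) auto
  also have "\<dots> = ennreal (A * B ^ Suc n * (C0 / cc) * kk R)"
    using K_le[OF R] C0_pos cc(1) G0 by (simp add: ennreal_mult[symmetric] mult.assoc)
  finally show ?thesis .
qed

definition MM :: "'a \<Rightarrow> real" where "MM \<theta> = (LINT z|lborel. ee \<theta> z * nu z)"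

definition Mmax where "Mmax = exp (\<kappa> * R1) * V + C0 * (C0 / cc)"

lemma ee_nu_nn:
  assumes th: "\<theta> \<in> E"
  shows "(\<integral>\<^sup>+z. ennreal (ee \<theta> z * nu z) \<partial>lborel) \<le> ennreal Mmax"
proof -
  have "(\<integral>\<^sup>+z. ennreal (ee \<theta> z * nu z) \<partial>lborel)
     \<le> (\<integral>\<^sup>+z. ennreal (exp (\<kappa> * R1)) * ennreal (nu z) + indicator {w. norm w > R1} z * ennreal (ee \<theta> z * nu z) \<partial>lborel)"
  proof (intro nn_integral_mono)
    fix z show "ennreal (ee \<theta> z * nu z) \<le> ennreal (exp (\<kappa> * R1)) * ennreal (nu z) + indicator {w. norm w > R1} z * ennreal (ee \<theta> z * nu z)"
    proof (cases "norm z > R1")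
      case False
      then have "ee \<theta> z * nu z \<le> exp (\<kappa> * R1) * nu z" using ee_le[OF th, of z R1] nu_nonneg[of z]
        by (intro mult_right_mono) auto
      then have "ennreal (ee \<theta> z * nu z) \<le> ennreal (exp (\<kappa> * R1)) * ennreal (nu z)"
        using nu_nonneg[of z] by (simp add: ennreal_mult[symmetric] ennreal_leI)
      then show ?thesis by (rule order_trans) simp
    qed simp
  qed
  also have "\<dots> = ennreal (exp (\<kappa> * R1)) * (\<integral>\<^sup>+z. ennreal (nu z) \<partial>lborel) + (\<integral>\<^sup>+z. indicator {w. norm w > R1} z * ennreal (ee \<theta> z * nu z) \<partial>lborel)"
    by (simp add: nn_integral_add nn_integral_cmult)
  also have "\<dots> \<le> ennreal (exp (\<kappa> * R1)) * ennreal V + ennreal (C0 * (C0 / cc) * kk R1)"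
    using tail_nu_nn[OF th order_refl] nn_nu by (intro add_mono) auto
  also have "\<dots> \<le> ennreal Mmax"
  proof -
    have "C0 * (C0 / cc) * kk R1 \<le> C0 * (C0 / cc) * 1"
      using K_le[of R1] C0_pos cc(1) by (intro mult_left_mono) auto
    then show ?thesis unfolding Mmax_def using V_nonneg K_le[of R1] C0_pos cc(1)
      by (simp add: ennreal_mult[symmetric] ennreal_plus[symmetric] del: ennreal_plus)
  qed
  finally show ?thesis .
qed

lemma ee_nu_int: "\<theta> \<in> E \<Longrightarrow> integrable lborel (\<lambda>z. ee \<theta> z * nu z)"
  using ee_nu_nn[of \<theta>] by (intro integrableI_nonneg) (auto simp: nu_nonneg intro: le_less_trans)

lemma MM_nn: "\<theta> \<in> E \<Longrightarrow> (\<integral>\<^sup>+z. ennreal (nu z * ee \<theta> z) \<partial>lborel) = ennreal (MM \<theta>)"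
  unfolding MM_def using ee_nu_int[of \<theta>] nu_nonneg
  by (subst nn_integral_eq_integral) (auto simp: mult.commute)

lemma MM_bounds: "\<theta> \<in> E \<Longrightarrow> 0 \<le> MM \<theta> \<and> MM \<theta> \<le> Mmax"
proof -
  assume th: "\<theta> \<in> E"
  have "0 \<le> MM \<theta>" unfolding MM_def using nu_nonneg by (simp add: integral_nonneg_AE)
  moreover have "ennreal (MM \<theta>) \<le> ennreal Mmax" using MM_nn[OF th] ee_nu_nn[OF th] by (simp add: mult.commute)
  moreover have "Mmax \<ge> 0" unfolding Mmax_def using V_nonneg C0_pos cc(1) by simp
  ultimately show ?thesis by (simp add: ennreal_le_iff)
qed

lemma cd_ee: assumes th: "\<theta> \<in> E"
  shows "integrable lborel (\<lambda>x. conv_dens nu (Suc n) x * ee \<theta> x)"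
    and "(LINT x|lborel. conv_dens nu (Suc n) x * ee \<theta> x) = MM \<theta> ^ Suc n"
proof -
  have nn: "(\<integral>\<^sup>+x. ennreal (conv_dens nu (Suc n) x * ee \<theta> x) \<partial>lborel) = ennreal (MM \<theta> ^ Suc n)"
    using cd_weighted[of "ee \<theta>" n] ee_mult[of \<theta>] MM_nn[OF th] MM_bounds[OF th]
    by (simp add: ennreal_power ennreal_mult[symmetric])
  show i: "integrable lborel (\<lambda>x. conv_dens nu (Suc n) x * ee \<theta> x)"
    using nn by (intro integrableI_nonneg) (auto simp: cd_nonneg)
  have "(LINT x|lborel. conv_dens nu (Suc n) x * ee \<theta> x) = enn2real (ennreal (MM \<theta> ^ Suc n))"
    by (subst integral_eq_nn_integral) (auto simp: cd_nonneg nn)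
  then show "(LINT x|lborel. conv_dens nu (Suc n) x * ee \<theta> x) = MM \<theta> ^ Suc n"
    using MM_bounds[OF th] by simp
qed



lemma tail_nu:
  assumes th: "\<theta> \<in> E" and R: "R \<ge> R1"
  shows "0 \<le> (LINT w|lborel. indicator {w. norm w > R} w * (ee \<theta> w * nu w))"
    "(LINT w|lborel. indicator {w. norm w > R} w * (ee \<theta> w * nu w)) \<le> C0 * (C0 / cc) * kk R"
proof -
  have e: "(LINT w|lborel. indicator {w. norm w > R} w * (ee \<theta> w * nu w)) =
    enn2real (\<integral>\<^sup>+w. indicator {w. norm w > R} w * ennreal (ee \<theta> w * nu w) \<partial>lborel)"
    by (subst integral_eq_nn_integral) (auto simp: nu_nonneg ennreal_ind_mult)
  show "0 \<le> (LINT w|lborel. indicator {w. norm w > R} w * (ee \<theta> w * nu w))" unfolding e by simp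
  have k: "C0 * (C0 / cc) * kk R \<ge> 0" using K_le[OF R] C0_pos cc(1) by simp
  show "(LINT w|lborel. indicator {w. norm w > R} w * (ee \<theta> w * nu w)) \<le> C0 * (C0 / cc) * kk R"
    unfolding e using tail_nu_nn[OF th R] k by (simp add: enn2real_leI)
qed

lemma tail_cd:
  assumes th: "\<theta> \<in> E" and R: "R \<ge> R1"
  shows "0 \<le> (LINT w|lborel. indicator {w. norm w > R} w * (conv_dens nu (Suc n) w * ee \<theta> w))"
    "(LINT w|lborel. indicator {w. norm w > R} w * (conv_dens nu (Suc n) w * ee \<theta> w)) \<le> A * B ^ Suc n * (C0 / cc) * kk R"
proof -
  have e: "(LINT w|lborel. indicator {w. norm w > R} w * (conv_dens nu (Suc n) w * ee \<theta> w)) =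
    enn2real (\<integral>\<^sup>+w. indicator {w. norm w > R} w * ennreal (conv_dens nu (Suc n) w * ee \<theta> w) \<partial>lborel)"
    by (subst integral_eq_nn_integral) (auto simp: cd_nonneg ennreal_ind_mult)
  show "0 \<le> (LINT w|lborel. indicator {w. norm w > R} w * (conv_dens nu (Suc n) w * ee \<theta> w))" unfolding e by simp
  have k: "A * B ^ Suc n * (C0 / cc) * kk R \<ge> 0" using K_le[OF R] C0_pos cc(1) A_ge B_ge by simp
  show "(LINT w|lborel. indicator {w. norm w > R} w * (conv_dens nu (Suc n) w * ee \<theta> w)) \<le> A * B ^ Suc n * (C0 / cc) * kk R"
    unfolding e using tail_cd_nn[OF th R, of n] k by (simp add: enn2real_leI)
qed

lemma decomp:
  assumes R: "R \<ge> R1" and x: "norm x > 2 * R"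
  shows "conv_dens nu (Suc (Suc n)) x =
     (LINT z|lborel. indicator (cball 0 R) z * (conv_dens nu (Suc n) (x - z) * nu z)) +
     (LINT w|lborel. indicator (cball 0 R) w * (conv_dens nu (Suc n) w * nu (x - w))) +
     (LINT z|lborel. indicator {z. norm (x - z) > R \<and> norm z > R} z * (conv_dens nu (Suc n) (x - z) * nu z))"
    "0 \<le> (LINT z|lborel. indicator {z. norm (x - z) > R \<and> norm z > R} z * (conv_dens nu (Suc n) (x - z) * nu z))"
    "(LINT z|lborel. indicator {z. norm (x - z) > R \<and> norm z > R} z * (conv_dens nu (Suc n) (x - z) * nu z))
       \<le> A * B ^ Suc n * C0 * kk R * f (norm x)"
proof -
  define F where "F z = conv_dens nu (Suc n) (x - z) * nu z" for z
  define G where "G = A * B ^ Suc n"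
  let ?S1 = "cball (0::'a) R" and ?S2 = "{z. norm (x - z) \<le> R}" and ?S3 = "{z. norm (x - z) > R \<and> norm z > R}"
  have Fm[measurable]: "F \<in> borel_measurable borel" unfolding F_def by measurable
  have F0: "F z \<ge> 0" for z unfolding F_def using cd_nonneg nu_nonneg by simp
  have G0: "G \<ge> 0" unfolding G_def using A_ge B_ge by simp
  have R0: "R > 0" using R R1_ge by simp
  have xR: "norm x - R > R" "norm x - R > 0" using x R0 by auto
  have fxR: "f (norm x - R) > 0" using f_pos xR by simp
  have fx: "f (norm x) > 0" using x R0 by (intro f_pos) linarith
  have kk: "K_fun TYPE('a) f R = ennreal (kk R)" "kk R \<ge> 0" using K_le[OF R] by auto
  have b1: "(\<integral>\<^sup>+z. ennreal (indicator ?S1 z * F z) \<partial>lborel) \<le> ennreal (G * f (norm x - R) * V)"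
  proof -
    have "(\<integral>\<^sup>+z. ennreal (indicator ?S1 z * F z) \<partial>lborel) \<le> (\<integral>\<^sup>+z. ennreal (G * f (norm x - R)) * ennreal (nu z) \<partial>lborel)"
    proof (intro nn_integral_mono)
      fix z show "ennreal (indicator ?S1 z * F z) \<le> ennreal (G * f (norm x - R)) * ennreal (nu z)"
      proof (cases "z \<in> ?S1")
        case True
        have d: "norm (x - z) \<ge> norm x - R" using norm_triangle_ineq2[of x z] True by simp
        have "conv_dens nu (Suc n) (x - z) \<le> G * f (norm (x - z))" unfolding G_def
          using cd_sharp[of "x - z" n] d xR R by simp
        also have "\<dots> \<le> G * f (norm x - R)" using G0 f_mono[OF xR(2) d] by (intro mult_left_mono) auto
        finally have "F z \<le> G * f (norm x - R) * nu z" unfolding F_def using nu_nonneg by (simp add: mult_right_mono)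
        then show ?thesis using True G0 fxR nu_nonneg[of z] by (simp add: ennreal_mult[symmetric] ennreal_leI)
      qed simp
    qed
    also have "\<dots> = ennreal (G * f (norm x - R)) * ennreal V" by (simp add: nn_integral_cmult nn_nu)
    also have "\<dots> = ennreal (G * f (norm x - R) * V)" using G0 fxR V_nonneg by (simp add: ennreal_mult[symmetric])
    finally show ?thesis .
  qed
  have b2: "(\<integral>\<^sup>+z. ennreal (indicator ?S2 z * F z) \<partial>lborel) \<le> ennreal (C0 * f (norm x - R) * V ^ Suc n)"
  proof -
    have "(\<integral>\<^sup>+z. ennreal (indicator ?S2 z * F z) \<partial>lborel) \<le> (\<integral>\<^sup>+z. ennreal (C0 * f (norm x - R)) * ennreal (conv_dens nu (Suc n) (x - z)) \<partial>lborel)"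
    proof (intro nn_integral_mono)
      fix z show "ennreal (indicator ?S2 z * F z) \<le> ennreal (C0 * f (norm x - R)) * ennreal (conv_dens nu (Suc n) (x - z))"
      proof (cases "z \<in> ?S2")
        case True
        have d: "norm z \<ge> norm x - R" using norm_triangle_ineq2[of x "x - z"] True by simp
        then have z0: "z \<noteq> 0" using xR by auto
        have "nu z \<le> C0 * f (norm z)" using nu_le[OF z0] .
        also have "\<dots> \<le> C0 * f (norm x - R)" using C0_pos f_mono[OF xR(2) d] by (intro mult_left_mono) auto
        finally have "conv_dens nu (Suc n) (x - z) * nu z \<le> conv_dens nu (Suc n) (x - z) * (C0 * f (norm x - R))"
          using cd_nonneg by (intro mult_left_mono) auto
        then have "F z \<le> C0 * f (norm x - R) * conv_dens nu (Suc n) (x - z)" unfolding F_def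
          by (simp add: algebra_simps)
        then show ?thesis using True C0_pos fxR cd_nonneg[of n "x - z"] by (simp add: ennreal_mult[symmetric] ennreal_leI)
      qed simp
    qed
    also have "\<dots> = ennreal (C0 * f (norm x - R)) * (\<integral>\<^sup>+z. ennreal (conv_dens nu (Suc n) (x - z)) \<partial>lborel)"
      by (rule nn_integral_cmult) measurable
    also have "(\<integral>\<^sup>+z. ennreal (conv_dens nu (Suc n) (x - z)) \<partial>lborel) = ennreal (V ^ Suc n)"
      using nn_integral_reflect_lborel[of "\<lambda>y. ennreal (conv_dens nu (Suc n) y)" x] cd_total[of n] by simp
    also have "ennreal (C0 * f (norm x - R)) * ennreal (V ^ Suc n) = ennreal (C0 * f (norm x - R) * V ^ Suc n)"
      using C0_pos fxR V_nonneg by (simp add: ennreal_mult[symmetric])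
    finally show ?thesis .
  qed
  have b3: "(\<integral>\<^sup>+z. ennreal (indicator ?S3 z * F z) \<partial>lborel) \<le> ennreal (G * C0 * kk R * f (norm x))"
  proof -
    have "(\<integral>\<^sup>+z. ennreal (indicator ?S3 z * F z) \<partial>lborel) \<le> (\<integral>\<^sup>+z. ennreal (G * C0) * (indicator ?S3 z * ennreal (f (norm (x - z)) * f (norm z))) \<partial>lborel)"
    proof (intro nn_integral_mono)
      fix z show "ennreal (indicator ?S3 z * F z) \<le> ennreal (G * C0) * (indicator ?S3 z * ennreal (f (norm (x - z)) * f (norm z)))"
      proof (cases "z \<in> ?S3")
        case True
        then have zz: "norm (x - z) > R" "norm z > R" by auto
        then have z0: "z \<noteq> 0" using R0 by auto
        have c1: "conv_dens nu (Suc n) (x - z) \<le> G * f (norm (x - z))" unfolding G_def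
          using cd_sharp[of "x - z" n] zz R by simp
        have c2: "nu z \<le> C0 * f (norm z)" using nu_le[OF z0] .
        have "F z \<le> (G * f (norm (x - z))) * (C0 * f (norm z))" unfolding F_def
          using c1 c2 cd_nonneg[of n "x - z"] nu_nonneg by (intro mult_mono) (auto intro: order_trans)
        then have le: "F z \<le> G * C0 * (f (norm (x - z)) * f (norm z))" by (simp add: algebra_simps)
        have "f (norm (x - z)) > 0" "f (norm z) > 0" using zz R0 by (intro f_pos; linarith)+
        then have ff: "f (norm (x - z)) * f (norm z) \<ge> 0" by simp
        have "ennreal (G * C0) * ennreal (f (norm (x - z)) * f (norm z)) = ennreal (G * C0 * (f (norm (x - z)) * f (norm z)))"
          using ff G0 C0_pos by (simp add: ennreal_mult)
        then show ?thesis using True le by (simp add: ennreal_leI)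
      qed simp
    qed
    also have "\<dots> = ennreal (G * C0) * (\<integral>\<^sup>+z. indicator ?S3 z * ennreal (f (norm (x - z)) * f (norm z)) \<partial>lborel)"
      by (rule nn_integral_cmult) measurable
    also have "\<dots> \<le> ennreal (G * C0) * (K_fun TYPE('a) f R * ennreal (f (norm x)))"
    proof -
      have "norm x > 1" using x R R1_ge by linarith
      then show ?thesis using K_bound[OF R0, of x] by (intro mult_left_mono) auto
    qed
    also have "\<dots> = ennreal (G * C0 * kk R * f (norm x))"
      using kk G0 C0_pos fx by (simp add: ennreal_mult[symmetric] mult.assoc)
    finally show ?thesis .
  qed
  have bnn: "G * f (norm x - R) * V \<ge> 0" "C0 * f (norm x - R) * V ^ Suc n \<ge> 0" "G * C0 * kk R * f (norm x) \<ge> 0"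
    using G0 fxR V_nonneg C0_pos kk fx by auto
  have I1: "integrable lborel (\<lambda>z. indicator ?S1 z * F z)"
    using int_from_nn(1)[OF _ _ b1 bnn(1)] F0 by (simp add: indicator_def)
  have I2: "integrable lborel (\<lambda>z. indicator ?S2 z * F z)"
    using int_from_nn(1)[OF _ _ b2 bnn(2)] F0 by (simp add: indicator_def)
  have I3: "integrable lborel (\<lambda>z. indicator ?S3 z * F z)"
    using int_from_nn(1)[OF _ _ b3 bnn(3)] F0 by (simp add: indicator_def)
  show "0 \<le> (LINT z|lborel. indicator ?S3 z * (conv_dens nu (Suc n) (x - z) * nu z))"
    using int_from_nn(3)[OF _ _ b3 bnn(3)] F0 unfolding F_def by (simp add: indicator_def)
  show "(LINT z|lborel. indicator ?S3 z * (conv_dens nu (Suc n) (x - z) * nu z)) \<le> A * B ^ Suc n * C0 * kk R * f (norm x)"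
    using int_from_nn(2)[OF _ _ b3 bnn(3)] F0 unfolding F_def G_def by (simp add: indicator_def)
  have split: "F z = indicator ?S1 z * F z + indicator ?S2 z * F z + indicator ?S3 z * F z" for z
  proof -
    have "\<not> (z \<in> ?S1 \<and> z \<in> ?S2)"
    proof
      assume "z \<in> ?S1 \<and> z \<in> ?S2"
      then have "norm x \<le> norm z + norm (x - z)" "norm z \<le> R" "norm (x - z) \<le> R"
        using norm_triangle_ineq[of z "x - z"] by auto
      then show False using x by simp
    qed
    then show ?thesis by (auto simp: indicator_def)
  qed
  have "conv_dens nu (Suc (Suc n)) x = (LINT z|lborel. F z)" unfolding F_def by simp
  also have "\<dots> = (LINT z|lborel. indicator ?S1 z * F z + indicator ?S2 z * F z + indicator ?S3 z * F z)"
    using split by simp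
  also have "\<dots> = (LINT z|lborel. indicator ?S1 z * F z) + (LINT z|lborel. indicator ?S2 z * F z) + (LINT z|lborel. indicator ?S3 z * F z)"
    using I1 I2 I3 by simp
  also have "(LINT z|lborel. indicator ?S2 z * F z) = (LINT w|lborel. indicator (cball 0 R) w * (conv_dens nu (Suc n) w * nu (x - w)))"
  proof -
    have "(LINT z|lborel. indicator ?S2 z * F z) = (LINT z|lborel. (\<lambda>w. indicator (cball 0 R) w * (conv_dens nu (Suc n) w * nu (x - w))) (x - z))"
      unfolding F_def by (intro Bochner_Integration.integral_cong) (auto simp: indicator_def dist_norm norm_minus_commute)
    also have "\<dots> = (LINT w|lborel. indicator (cball 0 R) w * (conv_dens nu (Suc n) w * nu (x - w)))"
    proof (rule integral_reflect_lborel)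
      have m1: "(\<lambda>w. nu (x - w)) \<in> borel_measurable borel"
        by (rule measurable_compose[OF _ nu_borel]) simp
      have m2: "(\<lambda>w. indicator (cball (0::'a) R) w :: real) \<in> borel_measurable borel"
        by (rule borel_measurable_indicator) simp
      show "(\<lambda>w. indicator (cball 0 R) w * (conv_dens nu (Suc n) w * nu (x - w))) \<in> borel_measurable borel"
        using m1 m2 by (intro borel_measurable_times) auto
    qed
    finally show ?thesis .
  qed
  finally show "conv_dens nu (Suc (Suc n)) x =
     (LINT z|lborel. indicator (cball 0 R) z * (conv_dens nu (Suc n) (x - z) * nu z)) +
     (LINT w|lborel. indicator (cball 0 R) w * (conv_dens nu (Suc n) w * nu (x - w))) +
     (LINT z|lborel. indicator ?S3 z * (conv_dens nu (Suc n) (x - z) * nu z))" unfolding F_def .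
qed

lemma f_ray:
  assumes "\<rho> \<ge> 0"
  shows "\<exists>L S. L > 0 \<and> S > \<rho> \<and> (\<forall>s\<ge>S. \<forall>\<theta>\<in>E. \<forall>w. norm (w - s *\<^sub>R \<theta>) \<le> \<rho> \<longrightarrow> f (norm w) \<le> L * nu (s *\<^sub>R \<theta>))"
proof -
  obtain L0 S0 where LS: "L0 > 0" "S0 > \<rho>" "\<And>u. u \<ge> S0 \<Longrightarrow> f (u - \<rho>) \<le> L0 * f u"
    using f_ratio[OF assms] by auto
  have "\<forall>s\<ge>S0. \<forall>\<theta>\<in>E. \<forall>w. norm (w - s *\<^sub>R \<theta>) \<le> \<rho> \<longrightarrow> f (norm w) \<le> (L0 / cc) * nu (s *\<^sub>R \<theta>)"
  proof (intro allI impI ballI)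
    fix s \<theta> w assume s: "s \<ge> S0" and th: "\<theta> \<in> E" and w: "norm (w - s *\<^sub>R \<theta>) \<le> \<rho>"
    have sp: "s > 0" "s - \<rho> > 0" using s LS assms by auto
    have "norm (s *\<^sub>R \<theta>) = s" using E_norm[OF th] sp by simp
    moreover have "norm (s *\<^sub>R \<theta>) \<le> norm w + norm (w - s *\<^sub>R \<theta>)"
      using norm_triangle_ineq[of w "s *\<^sub>R \<theta> - w"] by (simp add: norm_minus_commute)
    ultimately have d: "norm w \<ge> s - \<rho>" using w by simp
    have "f (norm w) \<le> f (s - \<rho>)" using f_mono[OF sp(2) d] .
    also have "\<dots> \<le> L0 * f s" using LS(3) s by simp
    also have "\<dots> \<le> L0 * (nu (s *\<^sub>R \<theta>) / cc)"
      using nu_lower[OF th sp(1)] cc(1) LS(1) by (intro mult_left_mono) (auto simp: field_simps)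
    finally show "f (norm w) \<le> (L0 / cc) * nu (s *\<^sub>R \<theta>)" by simp
  qed
  then show ?thesis using LS cc(1) by (intro exI[of _ "L0 / cc"] exI[of _ S0]) auto
qed

definition aa :: "nat \<Rightarrow> 'a \<Rightarrow> real" where "aa n \<theta> = real (Suc n) * MM \<theta> ^ n"

definition PP where "PP n R s = (\<lambda>(\<theta>, y). (LINT z|lborel. indicator (cball 0 R) z * (conv_dens nu (Suc n) (s *\<^sub>R \<theta> - y - z) * nu z)) / nu (s *\<^sub>R \<theta>))"
definition PL where "PL n R = (\<lambda>(\<theta>, y). aa n \<theta> * ee \<theta> y * (LINT z|lborel. indicator (cball 0 R) z * (ee \<theta> z * nu z)))"
definition QQ where "QQ n R s = (\<lambda>(\<theta>, y). (LINT w|lborel. indicator (cball 0 R) w * (conv_dens nu (Suc n) w * nu (s *\<^sub>R \<theta> - y - w))) / nu (s *\<^sub>R \<theta>))"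
definition QL where "QL n R = (\<lambda>(\<theta>, y). ee \<theta> y * (LINT w|lborel. indicator (cball 0 R) w * (conv_dens nu (Suc n) w * ee \<theta> w)))"

lemma Mmax_nonneg: "Mmax \<ge> 0" unfolding Mmax_def using V_nonneg C0_pos cc(1) by simp

lemma comb_instance:
  assumes J: "J \<subseteq> E \<times> cball 0 \<rho>" and \<rho>: "\<rho> \<ge> 0"
    and hyp: "\<And>R. R \<ge> R1 \<Longrightarrow> uniform_limit J (PP n R) (PL n R) at_top \<and> uniform_limit J (QQ n R) (QL n R) at_top"
  shows "uniform_limit J (\<lambda>s (\<theta>, y). conv_dens nu (Suc (Suc n)) (s *\<^sub>R \<theta> - y) / nu (s *\<^sub>R \<theta>)) (\<lambda>(\<theta>, y). aa (Suc n) \<theta> * ee \<theta> y) at_top"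
proof (rule comb_abstract)
  fix \<epsilon> :: real assume \<epsilon>: "\<epsilon> > 0"
  obtain L S where LS: "L > 0" "S > \<rho>" "\<And>s \<theta> w. s \<ge> S \<Longrightarrow> \<theta> \<in> E \<Longrightarrow> norm (w - s *\<^sub>R \<theta>) \<le> \<rho> \<Longrightarrow> f (norm w) \<le> L * nu (s *\<^sub>R \<theta>)"
    using f_ray[OF \<rho>] by blast
  define C1 where "C1 = A * B ^ Suc n * C0 * L"
  define C2 where "C2 = exp (\<kappa> * \<rho>) * (real (Suc n) * Mmax ^ n * (C0 * (C0 / cc)) + A * B ^ Suc n * (C0 / cc))"
  have C1: "C1 \<ge> 0" unfolding C1_def using A_ge B_ge C0_pos LS by simp
  have C2: "C2 \<ge> 0" unfolding C2_def using A_ge B_ge C0_pos cc(1) Mmax_nonneg by simp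
  have "eventually (\<lambda>R. kk R < \<epsilon> / (C1 + C2 + 1)) at_top"
    using kk_lim by (rule order_tendstoD) (use \<epsilon> C1 C2 in simp)
  then obtain R0 where R0: "\<And>R. R \<ge> R0 \<Longrightarrow> kk R < \<epsilon> / (C1 + C2 + 1)"
    by (auto simp: eventually_at_top_linorder)
  define R where "R = max R0 R1"
  have R: "R \<ge> R1" "kk R < \<epsilon> / (C1 + C2 + 1)" unfolding R_def using R0 by auto
  have kk0: "kk R \<ge> 0" using K_le[OF R(1)] by simp
  have kC1: "C1 * kk R \<le> \<epsilon>" and kC2: "C2 * kk R \<le> \<epsilon>"
  proof -
    have "(C1 + C2 + 1) * kk R \<le> \<epsilon>" using R(2) C1 C2 by (simp add: field_simps less_imp_le)
    then show "C1 * kk R \<le> \<epsilon>" "C2 * kk R \<le> \<epsilon>" using C1 C2 kk0 by (simp_all add: algebra_simps) (smt (verit) mult_nonneg_nonneg)+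
  qed
  show "\<exists>P Pl Q Ql. uniform_limit J P Pl at_top \<and> uniform_limit J Q Ql at_top \<and>
     eventually (\<lambda>s. \<forall>i\<in>J. \<bar>(\<lambda>s (\<theta>, y). conv_dens nu (Suc (Suc n)) (s *\<^sub>R \<theta> - y) / nu (s *\<^sub>R \<theta>)) s i - P s i - Q s i\<bar> \<le> \<epsilon>) at_top \<and>
     (\<forall>i\<in>J. \<bar>(\<lambda>(\<theta>, y). aa (Suc n) \<theta> * ee \<theta> y) i - Pl i - Ql i\<bar> \<le> \<epsilon>)"
  proof (intro exI conjI)
    show "uniform_limit J (PP n R) (PL n R) at_top" "uniform_limit J (QQ n R) (QL n R) at_top"
      using hyp[OF R(1)] by auto
    show "eventually (\<lambda>s. \<forall>i\<in>J. \<bar>(\<lambda>s (\<theta>, y). conv_dens nu (Suc (Suc n)) (s *\<^sub>R \<theta> - y) / nu (s *\<^sub>R \<theta>)) s i - PP n R s i - QQ n R s i\<bar> \<le> \<epsilon>) at_top"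
      unfolding eventually_at_top_linorder
    proof (intro exI[of _ "max S (2 * R + \<rho> + 1)"] allI impI ballI)
      fix s and i assume s: "max S (2 * R + \<rho> + 1) \<le> s" and i: "i \<in> J"
      obtain \<theta> y where i': "i = (\<theta>, y)" by force
      have th: "\<theta> \<in> E" and y: "norm y \<le> \<rho>" using i J i' by auto
      have sp: "s > 0" using s R(1) R1_ge \<rho> by auto
      have nup: "nu (s *\<^sub>R \<theta>) > 0" using nu_pos[OF th sp] .
      define x where "x = s *\<^sub>R \<theta> - y"
      have nx: "norm x > 2 * R"
      proof -
        have "norm (s *\<^sub>R \<theta>) = s" using E_norm[OF th] sp by simp
        moreover have "norm x \<ge> norm (s *\<^sub>R \<theta>) - norm y" unfolding x_def by (rule norm_triangle_ineq2)
        ultimately show ?thesis using s y by simp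
      qed
      note D = decomp[OF R(1) nx, of n]
      have fx: "f (norm x) \<le> L * nu (s *\<^sub>R \<theta>)" using LS(3)[of s \<theta> x] s th y unfolding x_def by simp
      let ?T = "(LINT z|lborel. indicator {z. norm (x - z) > R \<and> norm z > R} z * (conv_dens nu (Suc n) (x - z) * nu z))"
      have xz: "\<And>z. s *\<^sub>R \<theta> - y - z = x - z" unfolding x_def by simp
      have "(\<lambda>s (\<theta>, y). conv_dens nu (Suc (Suc n)) (s *\<^sub>R \<theta> - y) / nu (s *\<^sub>R \<theta>)) s i - PP n R s i - QQ n R s i
          = ?T / nu (s *\<^sub>R \<theta>)"
      proof -
        have p: "PP n R s i = (LINT z|lborel. indicator (cball 0 R) z * (conv_dens nu (Suc n) (x - z) * nu z)) / nu (s *\<^sub>R \<theta>)"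
          unfolding i' PP_def by (simp only: xz prod.case)
        have q: "QQ n R s i = (LINT w|lborel. indicator (cball 0 R) w * (conv_dens nu (Suc n) w * nu (x - w))) / nu (s *\<^sub>R \<theta>)"
          unfolding i' QQ_def by (simp only: xz prod.case)
        have h: "(\<lambda>s (\<theta>, y). conv_dens nu (Suc (Suc n)) (s *\<^sub>R \<theta> - y) / nu (s *\<^sub>R \<theta>)) s i = conv_dens nu (Suc (Suc n)) x / nu (s *\<^sub>R \<theta>)"
          unfolding i' x_def by simp
        show ?thesis unfolding p q h D(1) by (simp add: add_divide_distrib)
      qed
      moreover have "0 \<le> ?T / nu (s *\<^sub>R \<theta>)" using D(2) nup by simp
      moreover have "?T / nu (s *\<^sub>R \<theta>) \<le> \<epsilon>"
      proof -
        have "?T \<le> A * B ^ Suc n * C0 * kk R * (L * nu (s *\<^sub>R \<theta>))"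
          using D(3) fx A_ge B_ge C0_pos kk0 by (smt (verit) mult_left_mono mult_nonneg_nonneg zero_le_power)
        also have "\<dots> = (C1 * kk R) * nu (s *\<^sub>R \<theta>)" unfolding C1_def by (simp add: algebra_simps)
        also have "\<dots> \<le> \<epsilon> * nu (s *\<^sub>R \<theta>)" using kC1 nup by (simp add: mult_right_mono)
        finally show ?thesis using nup by (simp add: divide_le_eq)
      qed
      ultimately show "\<bar>(\<lambda>s (\<theta>, y). conv_dens nu (Suc (Suc n)) (s *\<^sub>R \<theta> - y) / nu (s *\<^sub>R \<theta>)) s i - PP n R s i - QQ n R s i\<bar> \<le> \<epsilon>"
        by simp
    qed
    show "\<forall>i\<in>J. \<bar>(\<lambda>(\<theta>, y). aa (Suc n) \<theta> * ee \<theta> y) i - PL n R i - QL n R i\<bar> \<le> \<epsilon>"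
    proof
      fix i assume i: "i \<in> J"
      obtain \<theta> y where i': "i = (\<theta>, y)" by force
      have th: "\<theta> \<in> E" and y: "norm y \<le> \<rho>" using i J i' by auto
      define t1 where "t1 = (LINT w|lborel. indicator {w. norm w > R} w * (ee \<theta> w * nu w))"
      define t2 where "t2 = (LINT w|lborel. indicator {w. norm w > R} w * (conv_dens nu (Suc n) w * ee \<theta> w))"
      have M1: "MM \<theta> = (LINT z|lborel. indicator (cball 0 R) z * (ee \<theta> z * nu z)) + t1"
        unfolding MM_def t1_def by (rule split_ind[OF ee_nu_int[OF th]])
      have M2: "MM \<theta> ^ Suc n = (LINT z|lborel. indicator (cball 0 R) z * (conv_dens nu (Suc n) z * ee \<theta> z)) + t2"
        unfolding t2_def cd_ee(2)[OF th, of n, symmetric] by (rule split_ind[OF cd_ee(1)[OF th]])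
      have t1b: "0 \<le> t1" "t1 \<le> C0 * (C0 / cc) * kk R" unfolding t1_def using tail_nu[OF th R(1)] by auto
      have t2b: "0 \<le> t2" "t2 \<le> A * B ^ Suc n * (C0 / cc) * kk R" unfolding t2_def using tail_cd[OF th R(1), of n] by auto
      have eey: "0 < ee \<theta> y" "ee \<theta> y \<le> exp (\<kappa> * \<rho>)" using ee_le[OF th y] by auto
      have Mb: "0 \<le> MM \<theta>" "MM \<theta> \<le> Mmax" using MM_bounds[OF th] by auto
      have eq: "aa (Suc n) \<theta> * ee \<theta> y - PL n R (\<theta>, y) - QL n R (\<theta>, y) = ee \<theta> y * (real (Suc n) * MM \<theta> ^ n * t1 + t2)"
      proof -
        define P1 where "P1 = (LINT z|lborel. indicator (cball 0 R) z * (ee \<theta> z * nu z))"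
        define P2 where "P2 = (LINT z|lborel. indicator (cball 0 R) z * (conv_dens nu (Suc n) z * ee \<theta> z))"
        define M where "M = MM \<theta>"
        have e1: "P1 = M - t1" using M1 unfolding P1_def M_def by simp
        have e2: "P2 = M * M ^ n - t2" using M2 unfolding P2_def M_def by simp
        have "aa (Suc n) \<theta> * ee \<theta> y - PL n R (\<theta>, y) - QL n R (\<theta>, y)
           = (real n + 2) * (M * M ^ n) * ee \<theta> y - (real n + 1) * M ^ n * ee \<theta> y * P1 - ee \<theta> y * P2"
          unfolding PL_def QL_def aa_def P1_def P2_def M_def by (simp add: algebra_simps)
        also have "\<dots> = ee \<theta> y * ((real n + 1) * M ^ n * t1 + t2)" unfolding e1 e2 by (simp add: algebra_simps)
        finally show ?thesis unfolding M_def by simp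
      qed
      have "real (Suc n) * MM \<theta> ^ n * t1 + t2 \<le> real (Suc n) * Mmax ^ n * (C0 * (C0 / cc) * kk R) + A * B ^ Suc n * (C0 / cc) * kk R"
      proof (rule add_mono)
        have "real (Suc n) * MM \<theta> ^ n \<le> real (Suc n) * Mmax ^ n" using Mb by (intro mult_left_mono power_mono) auto
        then show "real (Suc n) * MM \<theta> ^ n * t1 \<le> real (Suc n) * Mmax ^ n * (C0 * (C0 / cc) * kk R)"
          using t1b Mb Mmax_nonneg by (intro mult_mono) auto
      qed (use t2b in auto)
      also have "\<dots> = (real (Suc n) * Mmax ^ n * (C0 * (C0 / cc)) + A * B ^ Suc n * (C0 / cc)) * kk R" by (simp add: algebra_simps)
      finally have le: "real (Suc n) * MM \<theta> ^ n * t1 + t2 \<le> (real (Suc n) * Mmax ^ n * (C0 * (C0 / cc)) + A * B ^ Suc n * (C0 / cc)) * kk R" .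
      have nn: "0 \<le> real (Suc n) * MM \<theta> ^ n * t1 + t2" using t1b t2b Mb by simp
      have "ee \<theta> y * (real (Suc n) * MM \<theta> ^ n * t1 + t2) \<le> exp (\<kappa> * \<rho>) * ((real (Suc n) * Mmax ^ n * (C0 * (C0 / cc)) + A * B ^ Suc n * (C0 / cc)) * kk R)"
        using eey nn le by (intro mult_mono) auto
      also have "\<dots> = C2 * kk R" unfolding C2_def by simp
      finally show "\<bar>(\<lambda>(\<theta>, y). aa (Suc n) \<theta> * ee \<theta> y) i - PL n R i - QL n R i\<bar> \<le> \<epsilon>"
        unfolding i' using eq eey nn kC2 by simp
    qed
  qed
qed

lemma PP_eq: "PP n R s (\<theta>, y) = (LINT z|lborel. indicator (cball 0 R) z * (conv_dens nu (Suc n) (s *\<^sub>R \<theta> - (y + z)) / nu (s *\<^sub>R \<theta>) * nu z))"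
proof -
  have "PP n R s (\<theta>, y) = (LINT z|lborel. indicator (cball 0 R) z * (conv_dens nu (Suc n) (s *\<^sub>R \<theta> - y - z) * nu z) / nu (s *\<^sub>R \<theta>))"
    unfolding PP_def by simp
  also have "\<dots> = (LINT z|lborel. indicator (cball 0 R) z * (conv_dens nu (Suc n) (s *\<^sub>R \<theta> - (y + z)) / nu (s *\<^sub>R \<theta>) * nu z))"
    by (intro Bochner_Integration.integral_cong) (auto simp: diff_diff_eq)
  finally show ?thesis .
qed

lemma PL_eq: "PL n R (\<theta>, y) = (LINT z|lborel. indicator (cball 0 R) z * (aa n \<theta> * ee \<theta> (y + z) * nu z))"
proof -
  have "PL n R (\<theta>, y) = (LINT z|lborel. aa n \<theta> * ee \<theta> y * (indicator (cball 0 R) z * (ee \<theta> z * nu z)))"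
    unfolding PL_def by simp
  also have "\<dots> = (LINT z|lborel. indicator (cball 0 R) z * (aa n \<theta> * ee \<theta> (y + z) * nu z))"
    by (intro Bochner_Integration.integral_cong) (auto simp: ee_add)
  finally show ?thesis .
qed

lemma QQ_eq: "QQ n R s (\<theta>, y) = (LINT w|lborel. indicator (cball 0 R) w * (conv_dens nu (Suc n) w * (nu (s *\<^sub>R \<theta> - (y + w)) / nu (s *\<^sub>R \<theta>))))"
proof -
  have "QQ n R s (\<theta>, y) = (LINT w|lborel. indicator (cball 0 R) w * (conv_dens nu (Suc n) w * nu (s *\<^sub>R \<theta> - y - w)) / nu (s *\<^sub>R \<theta>))"
    unfolding QQ_def by simp
  also have "\<dots> = (LINT w|lborel. indicator (cball 0 R) w * (conv_dens nu (Suc n) w * (nu (s *\<^sub>R \<theta> - (y + w)) / nu (s *\<^sub>R \<theta>))))"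
    by (intro Bochner_Integration.integral_cong) (auto simp: diff_diff_eq)
  finally show ?thesis .
qed

lemma QL_eq: "QL n R (\<theta>, y) = (LINT w|lborel. indicator (cball 0 R) w * (conv_dens nu (Suc n) w * ee \<theta> (y + w)))"
proof -
  have "QL n R (\<theta>, y) = (LINT w|lborel. ee \<theta> y * (indicator (cball 0 R) w * (conv_dens nu (Suc n) w * ee \<theta> w)))"
    unfolding QL_def by simp
  also have "\<dots> = (LINT w|lborel. indicator (cball 0 R) w * (conv_dens nu (Suc n) w * ee \<theta> (y + w)))"
    by (intro Bochner_Integration.integral_cong) (auto simp: ee_add)
  finally show ?thesis .
qed

lemma ind_meas[measurable]: "(\<lambda>z. indicator (cball (0::'a) R) z :: real) \<in> borel_measurable borel"
  by (rule borel_measurable_indicator) simp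

lemma nu_shift_meas[measurable]: "(\<lambda>w. nu (c - w)) \<in> borel_measurable borel"
  by (rule measurable_compose[OF _ nu_borel]) simp

lemma cd_shift_meas[measurable]: "(\<lambda>w. conv_dens nu (Suc n) (c - w)) \<in> borel_measurable borel"
  by (rule measurable_compose[OF _ cd_meas]) simp

lemma P_lim_a:
  assumes th: "\<theta> \<in> E" and R: "R \<ge> 0"
    and IH: "\<And>u. ((\<lambda>s. conv_dens nu (Suc n) (s *\<^sub>R \<theta> - u) / nu (s *\<^sub>R \<theta>)) \<longlongrightarrow> aa n \<theta> * ee \<theta> u) at_top"
  shows "((\<lambda>s. PP n R s (\<theta>, y)) \<longlongrightarrow> PL n R (\<theta>, y)) at_top"
proof -
  define \<rho> where "\<rho> = norm y + R"
  have \<rho>: "\<rho> \<ge> 0" unfolding \<rho>_def using R by simp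
  obtain L S where LS: "L > 0" "S > \<rho>" "\<And>s \<theta> w. s \<ge> S \<Longrightarrow> \<theta> \<in> E \<Longrightarrow> norm (w - s *\<^sub>R \<theta>) \<le> \<rho> \<Longrightarrow> f (norm w) \<le> L * nu (s *\<^sub>R \<theta>)"
    using f_ray[OF \<rho>] by blast
  define Fs where "Fs s z = indicator (cball 0 R) z * (conv_dens nu (Suc n) (s *\<^sub>R \<theta> - (y + z)) / nu (s *\<^sub>R \<theta>) * nu z)" for s z
  define F0 where "F0 z = indicator (cball 0 R) z * (aa n \<theta> * ee \<theta> (y + z) * nu z)" for z
  define w where "w z = A * B ^ Suc n * L * (indicator (cball 0 R) z * nu z)" for z
  have "((\<lambda>s. LINT z|lborel. Fs s z) \<longlongrightarrow> (LINT z|lborel. F0 z)) at_top"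
  proof (rule integral_dominated_convergence_at_top[where w=w])
    show "F0 \<in> borel_measurable lborel" unfolding F0_def by measurable
    show "Fs s \<in> borel_measurable lborel" for s unfolding Fs_def by measurable
    show "integrable lborel w" unfolding w_def
      using integrable_real_mult_indicator[OF _ nu_finite, of "cball 0 R"] by (simp add: mult.commute)
    show "AE z in lborel. ((\<lambda>s. Fs s z) \<longlongrightarrow> F0 z) at_top"
    proof (intro AE_I2)
      fix z show "((\<lambda>s. Fs s z) \<longlongrightarrow> F0 z) at_top"
        unfolding Fs_def F0_def by (intro tendsto_mult_left tendsto_mult_right IH)
    qed
    show "\<forall>\<^sub>F s in at_top. AE z in lborel. norm (Fs s z) \<le> w z"
      unfolding eventually_at_top_linorder
    proof (intro exI[of _ "max S (\<rho> + R1 + 1)"] allI impI AE_I2)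
      fix s z assume s: "max S (\<rho> + R1 + 1) \<le> s"
      have sp: "s > 0" using s R1_ge \<rho> by auto
      have nup: "nu (s *\<^sub>R \<theta>) > 0" using nu_pos[OF th sp] .
      show "norm (Fs s z) \<le> w z"
      proof (cases "z \<in> cball 0 R")
        case True
        let ?u = "s *\<^sub>R \<theta> - (y + z)"
        have yz: "norm (y + z) \<le> \<rho>" unfolding \<rho>_def using True norm_triangle_ineq[of y z] by auto
        have d1: "norm (?u - s *\<^sub>R \<theta>) \<le> \<rho>" using yz by (simp add: norm_minus_commute add.commute)
        have "norm (s *\<^sub>R \<theta>) = s" using E_norm[OF th] sp by simp
        moreover have "norm ?u \<ge> norm (s *\<^sub>R \<theta>) - norm (y + z)" by (rule norm_triangle_ineq2)
        ultimately have "norm ?u \<ge> R1" using s yz by linarith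
        then have "conv_dens nu (Suc n) ?u \<le> A * B ^ Suc n * f (norm ?u)" by (rule cd_sharp)
        also have "\<dots> \<le> A * B ^ Suc n * (L * nu (s *\<^sub>R \<theta>))"
          using LS(3)[of s \<theta> ?u] s th d1 A_ge B_ge by (intro mult_left_mono) auto
        finally have a1: "conv_dens nu (Suc n) ?u / nu (s *\<^sub>R \<theta>) \<le> A * B ^ Suc n * L"
          using nup by (simp add: divide_le_eq algebra_simps)
        have a0: "conv_dens nu (Suc n) ?u / nu (s *\<^sub>R \<theta>) \<ge> 0" using cd_nonneg nup by simp
        have q1: "conv_dens nu (Suc n) ?u / nu (s *\<^sub>R \<theta>) * nu z \<le> A * B ^ Suc n * L * nu z"
          by (rule mult_right_mono[OF a1 nu_nonneg])
        have q0: "0 \<le> conv_dens nu (Suc n) ?u / nu (s *\<^sub>R \<theta>) * nu z"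
          by (rule mult_nonneg_nonneg[OF a0 nu_nonneg])
        have e1: "Fs s z = conv_dens nu (Suc n) ?u / nu (s *\<^sub>R \<theta>) * nu z" unfolding Fs_def using True by simp
        have e2: "w z = A * B ^ Suc n * L * nu z" unfolding w_def using True by simp
        show ?thesis unfolding e1 e2 using q0 q1 by simp
      qed (simp add: Fs_def w_def)
    qed
  qed
  moreover have "eventually (\<lambda>s. PP n R s (\<theta>, y) = (LINT z|lborel. Fs s z)) at_top"
    unfolding PP_eq Fs_def by simp
  ultimately show ?thesis unfolding PL_eq F0_def[symmetric] by (simp add: tendsto_cong)
qed

lemma Q_lim_a:
  assumes th: "\<theta> \<in> E" and R: "R \<ge> 0"
  shows "((\<lambda>s. QQ n R s (\<theta>, y)) \<longlongrightarrow> QL n R (\<theta>, y)) at_top"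
proof -
  define \<rho> where "\<rho> = norm y + R"
  have \<rho>: "\<rho> \<ge> 0" unfolding \<rho>_def using R by simp
  obtain L S where LS: "L > 0" "S > \<rho>" "\<And>s \<theta> w. s \<ge> S \<Longrightarrow> \<theta> \<in> E \<Longrightarrow> norm (w - s *\<^sub>R \<theta>) \<le> \<rho> \<Longrightarrow> f (norm w) \<le> L * nu (s *\<^sub>R \<theta>)"
    using f_ray[OF \<rho>] by blast
  define Fs where "Fs s z = indicator (cball 0 R) z * (conv_dens nu (Suc n) z * (nu (s *\<^sub>R \<theta> - (y + z)) / nu (s *\<^sub>R \<theta>)))" for s z
  define F0 where "F0 z = indicator (cball 0 R) z * (conv_dens nu (Suc n) z * ee \<theta> (y + z))" for z
  define w where "w z = C0 * L * (indicator (cball 0 R) z * conv_dens nu (Suc n) z)" for z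
  have "((\<lambda>s. LINT z|lborel. Fs s z) \<longlongrightarrow> (LINT z|lborel. F0 z)) at_top"
  proof (rule integral_dominated_convergence_at_top[where w=w])
    show "F0 \<in> borel_measurable lborel" unfolding F0_def by measurable
    show "Fs s \<in> borel_measurable lborel" for s unfolding Fs_def by measurable
    show "integrable lborel w" unfolding w_def
      using integrable_real_mult_indicator[OF _ cd_integrable, of "cball 0 R" n] by (simp add: mult.commute)
    show "AE z in lborel. ((\<lambda>s. Fs s z) \<longlongrightarrow> F0 z) at_top"
    proof (intro AE_I2)
      fix z show "((\<lambda>s. Fs s z) \<longlongrightarrow> F0 z) at_top"
        unfolding Fs_def F0_def by (intro tendsto_mult_left C_lim th)
    qed
    show "\<forall>\<^sub>F s in at_top. AE z in lborel. norm (Fs s z) \<le> w z"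
      unfolding eventually_at_top_linorder
    proof (intro exI[of _ "max S (\<rho> + 1)"] allI impI AE_I2)
      fix s z assume s: "max S (\<rho> + 1) \<le> s"
      have sp: "s > 0" using s \<rho> by auto
      have nup: "nu (s *\<^sub>R \<theta>) > 0" using nu_pos[OF th sp] .
      show "norm (Fs s z) \<le> w z"
      proof (cases "z \<in> cball 0 R")
        case True
        let ?u = "s *\<^sub>R \<theta> - (y + z)"
        have yz: "norm (y + z) \<le> \<rho>" unfolding \<rho>_def using True norm_triangle_ineq[of y z] by auto
        have d1: "norm (?u - s *\<^sub>R \<theta>) \<le> \<rho>" using yz by (simp add: norm_minus_commute add.commute)
        have "norm (s *\<^sub>R \<theta>) = s" using E_norm[OF th] sp by simp
        moreover have "norm ?u \<ge> norm (s *\<^sub>R \<theta>) - norm (y + z)" by (rule norm_triangle_ineq2)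
        ultimately have "norm ?u > 0" using s yz by linarith
        then have "?u \<noteq> 0" by auto
        then have "nu ?u \<le> C0 * f (norm ?u)" by (rule nu_le)
        also have "\<dots> \<le> C0 * (L * nu (s *\<^sub>R \<theta>))"
          using LS(3)[of s \<theta> ?u] s th d1 C0_pos by (intro mult_left_mono) auto
        finally have a1: "nu ?u / nu (s *\<^sub>R \<theta>) \<le> C0 * L"
          using nup by (simp add: divide_le_eq algebra_simps)
        have a0: "nu ?u / nu (s *\<^sub>R \<theta>) \<ge> 0" using nu_nonneg nup by simp
        have q1: "conv_dens nu (Suc n) z * (nu ?u / nu (s *\<^sub>R \<theta>)) \<le> conv_dens nu (Suc n) z * (C0 * L)"
          by (rule mult_left_mono[OF a1 cd_nonneg])
        have q0: "0 \<le> conv_dens nu (Suc n) z * (nu ?u / nu (s *\<^sub>R \<theta>))"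
          by (rule mult_nonneg_nonneg[OF cd_nonneg a0])
        have e1: "Fs s z = conv_dens nu (Suc n) z * (nu ?u / nu (s *\<^sub>R \<theta>))" unfolding Fs_def using True by simp
        have e2: "w z = conv_dens nu (Suc n) z * (C0 * L)" unfolding w_def using True by simp
        show ?thesis unfolding e1 e2 using q0 q1 by simp
      qed (simp add: Fs_def w_def)
    qed
  qed
  moreover have "(\<lambda>s. QQ n R s (\<theta>, y)) = (\<lambda>s. LINT z|lborel. Fs s z)"
    unfolding QQ_eq Fs_def by simp
  ultimately show ?thesis unfolding QL_eq F0_def[symmetric] by simp
qed

lemma int_ind_nu: "integrable lborel (\<lambda>z. indicator (cball 0 R) z * nu z)"
  using integrable_real_mult_indicator[OF _ nu_finite, of "cball 0 R"] by (simp add: mult.commute)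

lemma int_ind_nu_le: "(LINT z|lborel. indicator (cball 0 R) z * nu z) \<le> V"
  unfolding V_def using int_ind_nu nu_finite nu_nonneg by (intro integral_mono) (auto simp: indicator_def)

lemma int_ind_cd: "integrable lborel (\<lambda>z. indicator (cball 0 R) z * conv_dens nu (Suc n) z)"
  using integrable_real_mult_indicator[OF _ cd_integrable, of "cball 0 R" n] by (simp add: mult.commute)

lemma int_ind_cd_le: "(LINT z|lborel. indicator (cball 0 R) z * conv_dens nu (Suc n) z) \<le> V ^ Suc n"
  unfolding cd_integral[of n, symmetric] using int_ind_cd cd_integrable cd_nonneg by (intro integral_mono) (auto simp: indicator_def)

lemma P_lim_b:
  assumes \<rho>: "\<rho> > 0" and R: "R \<ge> 0"
    and IH: "\<And>r. r > 0 \<Longrightarrow> uniform_limit (E \<times> ball 0 r) (\<lambda>s (\<theta>, u). conv_dens nu (Suc n) (s *\<^sub>R \<theta> - u) / nu (s *\<^sub>R \<theta>)) (\<lambda>(\<theta>, u). aa n \<theta> * ee \<theta> u) at_top"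
  shows "uniform_limit (E \<times> ball 0 \<rho>) (PP n R) (PL n R) at_top"
  unfolding uniform_limit_iff
proof (intro allI impI)
  fix e :: real assume e: "e > 0"
  define \<epsilon> where "\<epsilon> = e / (V + 1)"
  have \<epsilon>: "\<epsilon> > 0" unfolding \<epsilon>_def using e V_nonneg by simp
  have ev: "eventually (\<lambda>s. \<forall>i\<in>E \<times> ball 0 (\<rho> + R + 1). dist ((\<lambda>(\<theta>, u). conv_dens nu (Suc n) (s *\<^sub>R \<theta> - u) / nu (s *\<^sub>R \<theta>)) i) ((\<lambda>(\<theta>, u). aa n \<theta> * ee \<theta> u) i) < \<epsilon>) at_top"
    using uniform_limitD[OF IH[of "\<rho> + R + 1"] \<epsilon>] \<rho> R by simp
  show "eventually (\<lambda>s. \<forall>i\<in>E \<times> ball 0 \<rho>. dist (PP n R s i) (PL n R i) < e) at_top"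
    using ev
  proof eventually_elim
    case (elim s)
    show ?case
    proof
      fix i :: "'a \<times> 'a" assume i: "i \<in> E \<times> ball 0 \<rho>"
      obtain \<theta> y where i': "i = (\<theta>, y)" by force
      have th: "\<theta> \<in> E" and y: "norm y < \<rho>" using i i' by auto
      define Fs where "Fs z = indicator (cball 0 R) z * (conv_dens nu (Suc n) (s *\<^sub>R \<theta> - (y + z)) / nu (s *\<^sub>R \<theta>) * nu z)" for z
      define F0 where "F0 z = indicator (cball 0 R) z * (aa n \<theta> * ee \<theta> (y + z) * nu z)" for z
      have F0i: "integrable lborel F0"
      proof -
        have "integrable lborel (\<lambda>z. (aa n \<theta> * ee \<theta> y) * (indicator (cball 0 R) z * (ee \<theta> z * nu z)))"
          using integrable_real_mult_indicator[OF _ ee_nu_int[OF th], of "cball 0 R"] by (simp add: mult.commute)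
        moreover have "F0 = (\<lambda>z. (aa n \<theta> * ee \<theta> y) * (indicator (cball 0 R) z * (ee \<theta> z * nu z)))"
          by (rule ext) (simp only: F0_def ee_add mult_ac)
        ultimately show ?thesis by simp
      qed
      have cl: "\<bar>Fs z - F0 z\<bar> \<le> \<epsilon> * (indicator (cball 0 R) z * nu z)" for z
      proof (cases "z \<in> cball 0 R")
        case True
        have "norm (y + z) \<le> norm y + norm z" by (rule norm_triangle_ineq)
        then have "(\<theta>, y + z) \<in> E \<times> ball 0 (\<rho> + R + 1)" using th y True by auto
        then have d: "\<bar>conv_dens nu (Suc n) (s *\<^sub>R \<theta> - (y + z)) / nu (s *\<^sub>R \<theta>) - aa n \<theta> * ee \<theta> (y + z)\<bar> < \<epsilon>"
          using elim by (force simp: dist_real_def)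
        have "\<bar>Fs z - F0 z\<bar> = \<bar>conv_dens nu (Suc n) (s *\<^sub>R \<theta> - (y + z)) / nu (s *\<^sub>R \<theta>) - aa n \<theta> * ee \<theta> (y + z)\<bar> * nu z"
        proof -
          define q where "q = conv_dens nu (Suc n) (s *\<^sub>R \<theta> - (y + z)) / nu (s *\<^sub>R \<theta>)"
          have "Fs z - F0 z = (q - aa n \<theta> * ee \<theta> (y + z)) * nu z"
            unfolding Fs_def F0_def q_def[symmetric] using True by (simp add: left_diff_distrib)
          then show ?thesis unfolding q_def[symmetric] using nu_nonneg[of z] by (simp add: abs_mult)
        qed
        also have "\<dots> \<le> \<epsilon> * nu z" using d nu_nonneg[of z] by (intro mult_right_mono) auto
        finally show ?thesis using True by simp
      qed (simp add: Fs_def F0_def)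
      have "\<bar>(LINT z|lborel. Fs z) - (LINT z|lborel. F0 z)\<bar> \<le> \<epsilon> * (LINT z|lborel. indicator (cball 0 R) z * nu z)"
        by (rule int_close(2)[OF _ F0i int_ind_nu cl]) (unfold Fs_def, measurable)
      also have "\<dots> \<le> \<epsilon> * V" using int_ind_nu_le \<epsilon> by (intro mult_left_mono) auto
      also have "\<dots> < e" unfolding \<epsilon>_def using e V_nonneg by (simp add: field_simps)
      finally show "dist (PP n R s i) (PL n R i) < e"
        unfolding i' PP_eq PL_eq Fs_def[symmetric] F0_def[symmetric] by (simp add: dist_real_def)
    qed
  qed
qed

lemma Q_lim_b:
  assumes \<rho>: "\<rho> > 0" and R: "R \<ge> 0"
    and Hb: "uniform_limit (E \<times> cball 0 (\<rho> + R)) (\<lambda>r (\<theta>, u). nu (r *\<^sub>R \<theta> - u) / nu (r *\<^sub>R \<theta>)) (\<lambda>(\<theta>, u). ee \<theta> u) at_top"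
  shows "uniform_limit (E \<times> ball 0 \<rho>) (QQ n R) (QL n R) at_top"
  unfolding uniform_limit_iff
proof (intro allI impI)
  fix e :: real assume e: "e > 0"
  define \<epsilon> where "\<epsilon> = e / (V ^ Suc n + 1)"
  have Vn: "V ^ Suc n \<ge> 0" using V_nonneg by simp
  have \<epsilon>: "\<epsilon> > 0" unfolding \<epsilon>_def using e Vn by simp
  have ev: "eventually (\<lambda>s. \<forall>i\<in>E \<times> cball 0 (\<rho> + R). dist ((\<lambda>(\<theta>, u). nu (s *\<^sub>R \<theta> - u) / nu (s *\<^sub>R \<theta>)) i) ((\<lambda>(\<theta>, u). ee \<theta> u) i) < \<epsilon>) at_top"
    using uniform_limitD[OF Hb \<epsilon>] by simp
  show "eventually (\<lambda>s. \<forall>i\<in>E \<times> ball 0 \<rho>. dist (QQ n R s i) (QL n R i) < e) at_top"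
    using ev
  proof eventually_elim
    case (elim s)
    show ?case
    proof
      fix i :: "'a \<times> 'a" assume i: "i \<in> E \<times> ball 0 \<rho>"
      obtain \<theta> y where i': "i = (\<theta>, y)" by force
      have th: "\<theta> \<in> E" and y: "norm y < \<rho>" using i i' by auto
      define Fs where "Fs z = indicator (cball 0 R) z * (conv_dens nu (Suc n) z * (nu (s *\<^sub>R \<theta> - (y + z)) / nu (s *\<^sub>R \<theta>)))" for z
      define F0 where "F0 z = indicator (cball 0 R) z * (conv_dens nu (Suc n) z * ee \<theta> (y + z))" for z
      have F0i: "integrable lborel F0"
      proof -
        have "integrable lborel (\<lambda>z. ee \<theta> y * (indicator (cball 0 R) z * (conv_dens nu (Suc n) z * ee \<theta> z)))"
          using integrable_real_mult_indicator[OF _ cd_ee(1)[OF th, of n], of "cball 0 R"] by (simp add: mult.commute)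
        moreover have "F0 = (\<lambda>z. ee \<theta> y * (indicator (cball 0 R) z * (conv_dens nu (Suc n) z * ee \<theta> z)))"
          by (rule ext) (simp only: F0_def ee_add mult_ac)
        ultimately show ?thesis by simp
      qed
      have cl: "\<bar>Fs z - F0 z\<bar> \<le> \<epsilon> * (indicator (cball 0 R) z * conv_dens nu (Suc n) z)" for z
      proof (cases "z \<in> cball 0 R")
        case True
        have "norm (y + z) \<le> norm y + norm z" by (rule norm_triangle_ineq)
        then have "(\<theta>, y + z) \<in> E \<times> cball 0 (\<rho> + R)" using th y True by auto
        then have d: "\<bar>nu (s *\<^sub>R \<theta> - (y + z)) / nu (s *\<^sub>R \<theta>) - ee \<theta> (y + z)\<bar> < \<epsilon>"
          using elim by (force simp: dist_real_def)
        have "\<bar>Fs z - F0 z\<bar> = conv_dens nu (Suc n) z * \<bar>nu (s *\<^sub>R \<theta> - (y + z)) / nu (s *\<^sub>R \<theta>) - ee \<theta> (y + z)\<bar>"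
        proof -
          define q where "q = nu (s *\<^sub>R \<theta> - (y + z)) / nu (s *\<^sub>R \<theta>)"
          have "Fs z - F0 z = conv_dens nu (Suc n) z * (q - ee \<theta> (y + z))"
            unfolding Fs_def F0_def q_def[symmetric] using True by (simp add: right_diff_distrib)
          then show ?thesis unfolding q_def[symmetric] using cd_nonneg[of n z] by (simp add: abs_mult)
        qed
        also have "\<dots> \<le> conv_dens nu (Suc n) z * \<epsilon>" using d cd_nonneg[of n z] by (intro mult_left_mono) auto
        finally show ?thesis using True by (simp add: mult.commute)
      qed (simp add: Fs_def F0_def)
      have "\<bar>(LINT z|lborel. Fs z) - (LINT z|lborel. F0 z)\<bar> \<le> \<epsilon> * (LINT z|lborel. indicator (cball 0 R) z * conv_dens nu (Suc n) z)"
        by (rule int_close(2)[OF _ F0i int_ind_cd cl]) (unfold Fs_def, measurable)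
      also have "\<dots> \<le> \<epsilon> * V ^ Suc n" using int_ind_cd_le \<epsilon> by (intro mult_left_mono) auto
      also have "\<dots> < e" unfolding \<epsilon>_def using e Vn by (simp add: field_simps)
      finally show "dist (QQ n R s i) (QL n R i) < e"
        unfolding i' QQ_eq QL_eq Fs_def[symmetric] F0_def[symmetric] by (simp add: dist_real_def)
    qed
  qed
qed

lemma ratio_a: "\<theta> \<in> E \<Longrightarrow> ((\<lambda>s. conv_dens nu (Suc n) (s *\<^sub>R \<theta> - u) / nu (s *\<^sub>R \<theta>)) \<longlongrightarrow> aa n \<theta> * ee \<theta> u) at_top"
proof (induction n arbitrary: u)
  case 0
  then show ?case using C_lim[of \<theta> u] by (simp add: aa_def)
next
  case (Suc n)
  have "uniform_limit {(\<theta>, u)} (\<lambda>s (\<theta>, y). conv_dens nu (Suc (Suc n)) (s *\<^sub>R \<theta> - y) / nu (s *\<^sub>R \<theta>)) (\<lambda>(\<theta>, y). aa (Suc n) \<theta> * ee \<theta> y) at_top"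
  proof (rule comb_instance[where \<rho> = "norm u"])
    show "{(\<theta>, u)} \<subseteq> E \<times> cball 0 (norm u)" using Suc.prems by auto
    fix R assume R: "R \<ge> R1"
    then have R0: "R \<ge> 0" using R1_ge by simp
    show "uniform_limit {(\<theta>, u)} (PP n R) (PL n R) at_top \<and> uniform_limit {(\<theta>, u)} (QQ n R) (QL n R) at_top"
      using P_lim_a[OF Suc.prems R0 Suc.IH[OF Suc.prems], of u] Q_lim_a[OF Suc.prems R0, of n u] by simp
  qed simp
  then show ?case by simp
qed

lemma ratio_b:
  assumes Hb: "\<forall>D. compact D \<longrightarrow> uniform_limit (E \<times> D) (\<lambda>r (\<theta>, y). nu (r *\<^sub>R \<theta> - y) / nu (r *\<^sub>R \<theta>)) (\<lambda>(\<theta>, y). exp (\<kappa> * (\<theta> \<bullet> y))) at_top"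
  shows "\<rho> > 0 \<Longrightarrow> uniform_limit (E \<times> ball 0 \<rho>) (\<lambda>s (\<theta>, u). conv_dens nu (Suc n) (s *\<^sub>R \<theta> - u) / nu (s *\<^sub>R \<theta>)) (\<lambda>(\<theta>, u). aa n \<theta> * ee \<theta> u) at_top"
proof (induction n arbitrary: \<rho>)
  case 0
  have "uniform_limit (E \<times> cball 0 \<rho>) (\<lambda>r (\<theta>, y). nu (r *\<^sub>R \<theta> - y) / nu (r *\<^sub>R \<theta>)) (\<lambda>(\<theta>, y). exp (\<kappa> * (\<theta> \<bullet> y))) at_top"
    using Hb by simp
  then have "uniform_limit (E \<times> ball 0 \<rho>) (\<lambda>r (\<theta>, y). nu (r *\<^sub>R \<theta> - y) / nu (r *\<^sub>R \<theta>)) (\<lambda>(\<theta>, y). exp (\<kappa> * (\<theta> \<bullet> y))) at_top"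
    by (rule uniform_limit_on_subset) auto
  then show ?case by (simp add: aa_def)
next
  case (Suc n)
  show ?case
  proof (rule comb_instance[where \<rho> = \<rho>])
    show "E \<times> ball 0 \<rho> \<subseteq> E \<times> cball 0 \<rho>" by auto
    show "0 \<le> \<rho>" using Suc.prems by simp
    fix R assume R: "R \<ge> R1"
    then have R0: "R \<ge> 0" using R1_ge by simp
    have Hb': "uniform_limit (E \<times> cball 0 (\<rho> + R)) (\<lambda>r (\<theta>, u). nu (r *\<^sub>R \<theta> - u) / nu (r *\<^sub>R \<theta>)) (\<lambda>(\<theta>, u). ee \<theta> u) at_top"
      using Hb by simp
    show "uniform_limit (E \<times> ball 0 \<rho>) (PP n R) (PL n R) at_top \<and> uniform_limit (E \<times> ball 0 \<rho>) (QQ n R) (QL n R) at_top"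
      using P_lim_b[OF Suc.prems R0 Suc.IH] Q_lim_b[OF Suc.prems R0 Hb', of n] by simp
  qed
qed

lemma LINT_ee_minus: "\<theta> \<in> E \<Longrightarrow> (LINT z|lborel. (exp (\<kappa> * (\<theta> \<bullet> z)) - 1) * nu z) = MM \<theta> - V"
proof -
  assume th: "\<theta> \<in> E"
  have "(LINT z|lborel. (exp (\<kappa> * (\<theta> \<bullet> z)) - 1) * nu z) = (LINT z|lborel. ee \<theta> z * nu z - nu z)"
    by (simp add: left_diff_distrib)
  also have "\<dots> = MM \<theta> - V" unfolding MM_def V_def
    using ee_nu_int[OF th] nu_finite by (rule Bochner_Integration.integral_diff)
  finally show ?thesis .
qed

lemma series:
  assumes I: "I \<subseteq> {0<..t0} \<times> E \<times> cball 0 \<rho>" and t0: "t0 > 0" and \<rho>: "\<rho> \<ge> 0"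
    and rat: "\<And>n. uniform_limit I (\<lambda>s (t, \<theta>, y). conv_dens nu (Suc n) (s *\<^sub>R \<theta> - y) / nu (s *\<^sub>R \<theta>)) (\<lambda>(t, \<theta>, y). aa n \<theta> * ee \<theta> y) at_top"
  shows "uniform_limit I (\<lambda>s (t, \<theta>, y). ptilde nu t (s *\<^sub>R \<theta> - y) / (t * nu (s *\<^sub>R \<theta>)))
     (\<lambda>(t, \<theta>, y). exp (\<kappa> * (\<theta> \<bullet> y)) * exp (t * (LINT z|lborel. (exp (\<kappa> * (\<theta> \<bullet> z)) - 1) * nu z))) at_top"
proof -
  obtain L S where LS: "L > 0" "S > \<rho>" "\<And>s \<theta> w. s \<ge> S \<Longrightarrow> \<theta> \<in> E \<Longrightarrow> norm (w - s *\<^sub>R \<theta>) \<le> \<rho> \<Longrightarrow> f (norm w) \<le> L * nu (s *\<^sub>R \<theta>)"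
    using f_ray[OF \<rho>] by blast
  define S0 where "S0 = max S (\<rho> + R1 + 1)"
  define rr where "rr n s = (\<lambda>(t::real, \<theta>, y). conv_dens nu (Suc n) (s *\<^sub>R \<theta> - y) / nu (s *\<^sub>R \<theta>))" for n s
  define lr where "lr n = (\<lambda>(t::real, \<theta>, y). aa n \<theta> * ee \<theta> y)" for n
  define cf where "cf n = (\<lambda>(t::real, \<theta>::'a, y::'a). t ^ n / fact (Suc n))" for n
  define u where "u n s i = cf n i * rr n s i" for n s i
  define v where "v n i = cf n i * lr n i" for n i
  define m where "m n = t0 ^ n / fact n * (A * B ^ Suc n * L + Mmax ^ n * exp (\<kappa> * \<rho>))" for n
  define ex where "ex = (\<lambda>(t::real, \<theta>::'a, y::'a). exp (- t * V))"
  have iI: "\<And>t \<theta> y. (t, \<theta>, y) \<in> I \<Longrightarrow> 0 < t \<and> t \<le> t0 \<and> \<theta> \<in> E \<and> norm y \<le> \<rho>" using I by auto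
  have cfb: "0 \<le> cf n i \<and> cf n i \<le> t0 ^ n / fact n" if i: "i \<in> I" for n i
  proof -
    obtain t \<theta> y where i': "i = (t, \<theta>, y)" by (cases i) auto
    have t: "0 < t" "t \<le> t0" using iI i i' by auto
    have "t ^ n / fact (Suc n) \<le> t0 ^ n / fact (Suc n)" using t by (intro divide_right_mono power_mono) auto
    also have "\<dots> \<le> t0 ^ n / fact n" using t0 by (intro divide_left_mono) (auto simp: fact_mono)
    finally show ?thesis unfolding cf_def i' using t by simp
  qed
  have lim: "uniform_limit I (u n) (v n) at_top" for n
  proof -
    have "uniform_limit I (rr n) (lr n) at_top" unfolding rr_def lr_def by (rule rat)
    then have "uniform_limit I (\<lambda>s i. cf n i * rr n s i) (\<lambda>i. cf n i * lr n i) at_top"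
      by (rule uniform_limit_cmult_bounded[where K = "t0 ^ n / fact n"]) (use cfb in auto)
    then show ?thesis unfolding u_def v_def .
  qed
  have msum: "summable m"
  proof -
    have "summable (\<lambda>n. (A * B * L) * (inverse (fact n) * (t0 * B) ^ n) + exp (\<kappa> * \<rho>) * (inverse (fact n) * (t0 * Mmax) ^ n))"
      by (intro summable_add summable_mult summable_exp)
    moreover have "m = (\<lambda>n. (A * B * L) * (inverse (fact n) * (t0 * B) ^ n) + exp (\<kappa> * \<rho>) * (inverse (fact n) * (t0 * Mmax) ^ n))"
      unfolding m_def by (rule ext) (simp add: power_mult_distrib field_simps)
    ultimately show ?thesis by simp
  qed
  have rrb: "0 \<le> rr n s i \<and> rr n s i \<le> A * B ^ Suc n * L" if s: "s \<ge> S0" and i: "i \<in> I" for n s i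
  proof -
    obtain t \<theta> y where i': "i = (t, \<theta>, y)" by (cases i) auto
    have th: "\<theta> \<in> E" and y: "norm y \<le> \<rho>" using iI i i' by auto
    have sp: "s > 0" using s R1_ge \<rho> unfolding S0_def by auto
    have nup: "nu (s *\<^sub>R \<theta>) > 0" using nu_pos[OF th sp] .
    let ?u = "s *\<^sub>R \<theta> - y"
    have d1: "norm (?u - s *\<^sub>R \<theta>) \<le> \<rho>" using y by simp
    have "norm (s *\<^sub>R \<theta>) = s" using E_norm[OF th] sp by simp
    moreover have "norm ?u \<ge> norm (s *\<^sub>R \<theta>) - norm y" by (rule norm_triangle_ineq2)
    ultimately have "norm ?u \<ge> R1" using s y unfolding S0_def by linarith
    then have "conv_dens nu (Suc n) ?u \<le> A * B ^ Suc n * f (norm ?u)" by (rule cd_sharp)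
    also have "\<dots> \<le> A * B ^ Suc n * (L * nu (s *\<^sub>R \<theta>))"
      using LS(3)[of s \<theta> ?u] s th d1 A_ge B_ge unfolding S0_def by (intro mult_left_mono) auto
    finally have a1: "conv_dens nu (Suc n) ?u / nu (s *\<^sub>R \<theta>) \<le> A * B ^ Suc n * L"
      using nup by (simp add: divide_le_eq algebra_simps)
    have a0: "conv_dens nu (Suc n) ?u / nu (s *\<^sub>R \<theta>) \<ge> 0" using cd_nonneg nup by simp
    show ?thesis unfolding rr_def i' using a0 a1 by simp
  qed
  have mpos: "0 \<le> Mmax ^ n * exp (\<kappa> * \<rho>)" for n using Mmax_nonneg by simp
  have bu0: "\<bar>u n s i\<bar> \<le> m n" if s: "S0 \<le> s" and i: "i \<in> I" for s n i
  proof -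
    have c: "0 \<le> cf n i" "cf n i \<le> t0 ^ n / fact n" using cfb[OF i] by auto
    have r: "0 \<le> rr n s i" "rr n s i \<le> A * B ^ Suc n * L" using rrb[OF s i] by auto
    have "\<bar>u n s i\<bar> = cf n i * rr n s i" unfolding u_def using c r by simp
    also have "\<dots> \<le> t0 ^ n / fact n * (A * B ^ Suc n * L)" using c r by (intro mult_mono) auto
    also have "\<dots> \<le> m n" unfolding m_def using mpos[of n] t0 by (intro mult_left_mono) auto
    finally show "\<bar>u n s i\<bar> \<le> m n" .
  qed
  have bu: "eventually (\<lambda>s. \<forall>n. \<forall>i\<in>I. \<bar>u n s i\<bar> \<le> m n) at_top"
    unfolding eventually_at_top_linorder using bu0 by blast
  have veq: "v n (t, \<theta>, y) = ee \<theta> y * ((t * MM \<theta>) ^ n / fact n)" for n t \<theta> y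
    unfolding v_def cf_def lr_def aa_def by (simp add: power_mult_distrib field_simps del: of_nat_Suc)
  have bv: "\<bar>v n i\<bar> \<le> m n" if i: "i \<in> I" for n i
  proof -
    obtain t \<theta> y where i': "i = (t, \<theta>, y)" by (cases i) auto
    have t: "0 < t" "t \<le> t0" and th: "\<theta> \<in> E" and y: "norm y \<le> \<rho>" using iI i i' by auto
    have Mb: "0 \<le> MM \<theta>" "MM \<theta> \<le> Mmax" using MM_bounds[OF th] by auto
    have e: "0 < ee \<theta> y" "ee \<theta> y \<le> exp (\<kappa> * \<rho>)" using ee_le[OF th y] by auto
    have "\<bar>v n i\<bar> = ee \<theta> y * ((t * MM \<theta>) ^ n / fact n)" unfolding i' veq using e t Mb by simp
    also have "\<dots> \<le> exp (\<kappa> * \<rho>) * ((t0 * Mmax) ^ n / fact n)"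
      using e t Mb by (intro mult_mono divide_right_mono power_mono) auto
    also have "\<dots> = t0 ^ n / fact n * (Mmax ^ n * exp (\<kappa> * \<rho>))" by (simp add: power_mult_distrib field_simps)
    also have "\<dots> \<le> m n" unfolding m_def using t0 A_ge B_ge LS(1) by (intro mult_left_mono) auto
    finally show ?thesis .
  qed
  have T: "uniform_limit I (\<lambda>s i. \<Sum>n. u n s i) (\<lambda>i. \<Sum>n. v n i) at_top"
    by (rule tannery_unif[OF lim msum bu bv])
  have T2: "uniform_limit I (\<lambda>s i. ex i * (\<Sum>n. u n s i)) (\<lambda>i. ex i * (\<Sum>n. v n i)) at_top"
  proof (rule uniform_limit_cmult_bounded[OF T, where K = 1])
    fix i assume "i \<in> I"
    then obtain t \<theta> y where i': "i = (t, \<theta>, y)" and t: "t > 0" using iI by (cases i) auto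
    show "\<bar>ex i\<bar> \<le> 1" unfolding ex_def i' using t V_nonneg by simp
  qed
  show ?thesis
  proof (rule uniform_limit_cong[THEN iffD1, OF _ _ T2])
    show "eventually (\<lambda>s. \<forall>i\<in>I. ex i * (\<Sum>n. u n s i) = (\<lambda>(t, \<theta>, y). ptilde nu t (s *\<^sub>R \<theta> - y) / (t * nu (s *\<^sub>R \<theta>))) i) at_top"
      unfolding eventually_at_top_linorder
    proof (intro exI[of _ S0] allI impI ballI)
      fix s i assume s: "S0 \<le> s" and i: "i \<in> I"
      obtain t \<theta> y where i': "i = (t, \<theta>, y)" by (cases i) auto
      have t: "0 < t" and th: "\<theta> \<in> E" using iI i i' by auto
      have sp: "s > 0" using s R1_ge \<rho> unfolding S0_def by auto
      have nup: "nu (s *\<^sub>R \<theta>) > 0" using nu_pos[OF th sp] .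
      have su: "summable (\<lambda>n. u n s i)"
        by (rule summable_comparison_test[OF _ msum]) (use bu0 s i in \<open>auto intro!: exI[of _ 0]\<close>)
      have "(\<lambda>n. t ^ Suc n * conv_dens nu (Suc n) (s *\<^sub>R \<theta> - y) / fact (Suc n)) = (\<lambda>n. (t * nu (s *\<^sub>R \<theta>)) * u n s i)"
        unfolding u_def cf_def rr_def i' using nup t by (intro ext) (simp add: field_simps del: fact_Suc)
      then have "(\<Sum>n. t ^ Suc n * conv_dens nu (Suc n) (s *\<^sub>R \<theta> - y) / fact (Suc n)) = (t * nu (s *\<^sub>R \<theta>)) * (\<Sum>n. u n s i)"
        using suminf_mult[OF su] by simp
      moreover have "total_mass nu = V" unfolding total_mass_def V_def ..
      ultimately show "ex i * (\<Sum>n. u n s i) = (\<lambda>(t, \<theta>, y). ptilde nu t (s *\<^sub>R \<theta> - y) / (t * nu (s *\<^sub>R \<theta>))) i"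
        unfolding ptilde_def ex_def i' using nup t by (simp add: field_simps)
    qed
    fix i assume i: "i \<in> I"
    obtain t \<theta> y where i': "i = (t, \<theta>, y)" by (cases i) auto
    have th: "\<theta> \<in> E" using iI i i' by auto
    have "(\<lambda>n. (t * MM \<theta>) ^ n / fact n) sums exp (t * MM \<theta>)"
      using exp_converges[of "t * MM \<theta>"] by (simp add: divide_inverse mult.commute)
    then have "(\<lambda>n. v n i) sums (ee \<theta> y * exp (t * MM \<theta>))"
      unfolding i' veq by (rule sums_mult)
    then have "(\<Sum>n. v n i) = ee \<theta> y * exp (t * MM \<theta>)" by (rule sums_unique[symmetric])
    show "ex i * (\<Sum>n. v n i) = (\<lambda>(t, \<theta>, y). exp (\<kappa> * (\<theta> \<bullet> y)) * exp (t * (LINT z|lborel. (exp (\<kappa> * (\<theta> \<bullet> z)) - 1) * nu z))) i"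
    proof -
      have r: "(\<lambda>(t, \<theta>, y). exp (\<kappa> * (\<theta> \<bullet> y)) * exp (t * (LINT z|lborel. (exp (\<kappa> * (\<theta> \<bullet> z)) - 1) * nu z))) (t, \<theta>, y)
          = ee \<theta> y * exp (t * (MM \<theta> - V))"
        by (simp only: prod.case LINT_ee_minus[OF th])
      have "ex i * (\<Sum>n. v n i) = ee \<theta> y * (exp (- t * V) * exp (t * MM \<theta>))"
        unfolding ex_def i' using \<open>(\<Sum>n. v n i) = ee \<theta> y * exp (t * MM \<theta>)\<close> unfolding i' by simp
      also have "\<dots> = ee \<theta> y * exp (t * (MM \<theta> - V))" by (simp add: exp_add[symmetric] algebra_simps)
      finally show ?thesis unfolding i' r .
    qed
  qed
qed

lemma final_c:
  assumes t0: "t0 > 0"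
  shows "(\<forall>t\<in>{0<..t0}. \<forall>\<theta>\<in>E. \<forall>y.
           ((\<lambda>s. ptilde nu t (s *\<^sub>R \<theta> - y) / (t * nu (s *\<^sub>R \<theta>)))
             \<longlongrightarrow> exp (\<kappa> * (\<theta> \<bullet> y)) *
                 exp (t * (LINT z|lborel. (exp (\<kappa> * (\<theta> \<bullet> z)) - 1) * nu z))) at_top)
       \<and> ((\<forall>D. compact D \<longrightarrow>
             uniform_limit (E \<times> D)
               (\<lambda>r (\<theta>, y). nu (r *\<^sub>R \<theta> - y) / nu (r *\<^sub>R \<theta>))
               (\<lambda>(\<theta>, y). exp (\<kappa> * (\<theta> \<bullet> y))) at_top)
           \<longrightarrow> (\<forall>\<rho>>0.
             uniform_limit ({0<..t0} \<times> E \<times> ball 0 \<rho>)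
               (\<lambda>s (t, \<theta>, y). ptilde nu t (s *\<^sub>R \<theta> - y) / (t * nu (s *\<^sub>R \<theta>)))
               (\<lambda>(t, \<theta>, y). exp (\<kappa> * (\<theta> \<bullet> y)) *
                  exp (t * (LINT z|lborel. (exp (\<kappa> * (\<theta> \<bullet> z)) - 1) * nu z)))
               at_top))"
proof (intro conjI ballI allI impI)
  fix t \<theta> y assume t: "t \<in> {0<..t0}" and th: "\<theta> \<in> E"
  have "uniform_limit {(t, \<theta>, y)} (\<lambda>s (t, \<theta>, y). ptilde nu t (s *\<^sub>R \<theta> - y) / (t * nu (s *\<^sub>R \<theta>)))
     (\<lambda>(t, \<theta>, y). exp (\<kappa> * (\<theta> \<bullet> y)) * exp (t * (LINT z|lborel. (exp (\<kappa> * (\<theta> \<bullet> z)) - 1) * nu z))) at_top"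
  proof (rule series[where \<rho> = "norm y"])
    show "{(t, \<theta>, y)} \<subseteq> {0<..t0} \<times> E \<times> cball 0 (norm y)" using t th by auto
    fix n
    show "uniform_limit {(t, \<theta>, y)} (\<lambda>s (t, \<theta>, y). conv_dens nu (Suc n) (s *\<^sub>R \<theta> - y) / nu (s *\<^sub>R \<theta>)) (\<lambda>(t, \<theta>, y). aa n \<theta> * ee \<theta> y) at_top"
      using ratio_a[OF th, of n y] by simp
  qed (use t0 in auto)
  then show "((\<lambda>s. ptilde nu t (s *\<^sub>R \<theta> - y) / (t * nu (s *\<^sub>R \<theta>)))
             \<longlongrightarrow> exp (\<kappa> * (\<theta> \<bullet> y)) *
                 exp (t * (LINT z|lborel. (exp (\<kappa> * (\<theta> \<bullet> z)) - 1) * nu z))) at_top" by simp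
next
  fix \<rho> :: real
  assume Hb: "\<forall>D. compact D \<longrightarrow> uniform_limit (E \<times> D) (\<lambda>r (\<theta>, y). nu (r *\<^sub>R \<theta> - y) / nu (r *\<^sub>R \<theta>)) (\<lambda>(\<theta>, y). exp (\<kappa> * (\<theta> \<bullet> y))) at_top"
    and \<rho>: "\<rho> > 0"
  show "uniform_limit ({0<..t0} \<times> E \<times> ball 0 \<rho>)
               (\<lambda>s (t, \<theta>, y). ptilde nu t (s *\<^sub>R \<theta> - y) / (t * nu (s *\<^sub>R \<theta>)))
               (\<lambda>(t, \<theta>, y). exp (\<kappa> * (\<theta> \<bullet> y)) *
                  exp (t * (LINT z|lborel. (exp (\<kappa> * (\<theta> \<bullet> z)) - 1) * nu z)))
               at_top"
  proof (rule series[where \<rho> = \<rho>])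
    show "{0<..t0} \<times> E \<times> ball 0 \<rho> \<subseteq> {0<..t0} \<times> E \<times> cball 0 \<rho>" by auto
    fix n
    show "uniform_limit ({0<..t0} \<times> E \<times> ball 0 \<rho>) (\<lambda>s (t, \<theta>, y). conv_dens nu (Suc n) (s *\<^sub>R \<theta> - y) / nu (s *\<^sub>R \<theta>)) (\<lambda>(t, \<theta>, y). aa n \<theta> * ee \<theta> y) at_top"
      by (rule lift_t[OF ratio_b[OF Hb \<rho>]]) auto
  qed (use t0 \<rho> in auto)
qed

end


theorem lemma7:
  fixes nu :: "'a::euclidean_space \<Rightarrow> real"
    and f :: "real \<Rightarrow> real"
    and E :: "'a set" and \<kappa> C0 t0 :: real
  assumes nu_meas: "nu \<in> borel_measurable lborel"
    and nu_nonneg: "\<And>x. nu x \<ge> 0"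
    and nu_finite: "integrable lborel nu"
    \<comment> \<open>condition (B)\<close>
    and f_pos: "\<And>r. r > 0 \<Longrightarrow> f r > 0"
    and f_mono: "\<And>r s. 0 < r \<Longrightarrow> r \<le> s \<Longrightarrow> f s \<le> f r"
    and C0_pos: "C0 > 0"
    and nu_le: "\<And>x. x \<noteq> 0 \<Longrightarrow> nu x \<le> C0 * f (norm x)"
    and liminf_pos: "Liminf (at_right 0)
          (\<lambda>r. ereal ((set_lebesgue_integral lborel {x. norm x > r} nu) / (f r * r ^ DIM('a)))) > 0"
    and K_mono: "\<And>r s. 0 < r \<Longrightarrow> r \<le> s \<Longrightarrow> K_fun TYPE('a) f s \<le> K_fun TYPE('a) f r"
    and K_lim: "(K_fun TYPE('a) f \<longlongrightarrow> 0) at_top"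
    \<comment> \<open>condition (C)\<close>
    and E_sphere: "E \<subseteq> sphere 0 1"
    and \<kappa>_nonneg: "\<kappa> \<ge> 0"
    and C_lim: "\<And>\<theta> y. \<theta> \<in> E \<Longrightarrow>
          ((\<lambda>r. nu (r *\<^sub>R \<theta> - y) / nu (r *\<^sub>R \<theta>)) \<longlongrightarrow> exp (\<kappa> * (\<theta> \<bullet> y))) at_top"
    and C_inf: "\<exists>c>0. \<forall>x\<in>Gamma_cone E. nu x / f (norm x) \<ge> c"
    and t0_pos: "t0 > 0"
  shows "(\<forall>t\<in>{0<..t0}. \<forall>\<theta>\<in>E. \<forall>y.
           ((\<lambda>s. ptilde nu t (s *\<^sub>R \<theta> - y) / (t * nu (s *\<^sub>R \<theta>)))
             \<longlongrightarrow> exp (\<kappa> * (\<theta> \<bullet> y)) *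
                 exp (t * (LINT z|lborel. (exp (\<kappa> * (\<theta> \<bullet> z)) - 1) * nu z))) at_top)
       \<and> ((\<forall>D. compact D \<longrightarrow>
             uniform_limit (E \<times> D)
               (\<lambda>r (\<theta>, y). nu (r *\<^sub>R \<theta> - y) / nu (r *\<^sub>R \<theta>))
               (\<lambda>(\<theta>, y). exp (\<kappa> * (\<theta> \<bullet> y))) at_top)
           \<longrightarrow> (\<forall>\<rho>>0.
             uniform_limit ({0<..t0} \<times> E \<times> ball 0 \<rho>)
               (\<lambda>s (t, \<theta>, y). ptilde nu t (s *\<^sub>R \<theta> - y) / (t * nu (s *\<^sub>R \<theta>)))
               (\<lambda>(t, \<theta>, y). exp (\<kappa> * (\<theta> \<bullet> y)) *
                  exp (t * (LINT z|lborel. (exp (\<kappa> * (\<theta> \<bullet> z)) - 1) * nu z)))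
               at_top))"
  proof (cases "E = {}")
  case True
  then show ?thesis by simp
next
  case False
  interpret L: L7f nu f C0 E \<kappa>
    by (unfold_locales) (use nu_meas nu_nonneg nu_finite f_pos f_mono C0_pos nu_le liminf_pos K_mono K_lim E_sphere \<kappa>_nonneg C_lim C_inf False in auto)
  obtain R1 A B where RAB: "R1 \<ge> 1" "A \<ge> 1" "B \<ge> 1" "K_fun TYPE('a) f R1 < 1"
    "\<And>n w. R1 \<le> norm w \<Longrightarrow> conv_dens nu (Suc n) w \<le> A * B ^ Suc n * f (norm w)"
    using L.sharp by blast
  interpret C: L7c nu f C0 E \<kappa> R1 A B
    by (unfold_locales) (use RAB in auto)
  show ?thesis using C.final_c[OF t0_pos] .
qed

end
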